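(* Let $\mathcal{C}$ be a d-category and $\mathrm{Rat}(\mathcal{C})$ the class of rational $\mathcal{C}$-languages. Then $(\mathrm{Rat}(\mathcal{C}),+,\emptyset,*,(-)^+)$ is a non-unital Kleene algebra: $\mathrm{Rat}(\mathcal{C})$ contains $\emptyset$ and is closed under $+$, $*$ and $(-)^+$; $+$ is associative, commutative, idempotent with unit $\emptyset$; $*$ is associative, distributes over $+$ on both sides, and $\emptyset$ is absorbing for $*$; and for all $L,M\in\mathrm{Rat}(\mathcal{C})$: $L+L^+*L^+\subseteq L^+$, and $L+M*M\subseteq M$ implies $L^+\subseteq M$.
   Context: A d-category is a small category $\mathcal{C}$ with wide subcategories $\mathcal{C}^+$ (formorphisms) and $\mathcal{C}^-$ (backmorphisms) such that an invertible $\varphi$ is in $\mathcal{C}^+$ iff $\varphi^{-1}\in\mathcal{C}^-$. A $\mathcal{C}$-automaton is a presheaf $X:\mathcal{C}^{op}\to\mathbf{Set}$ with sets of start and accept elements; morphisms preserve them. Simple automata have exactly one start and one accept element, lying over $\mathrm{src}(X),\mathrm{tgt}(X)$; for simple $X,Y$ with $\mathrm{tgt}X=\mathrm{src}Y=U$, $X*Y$ is the pushout of $X\leftarrow\mathcal{C}(-,U)\to Y$ (along accept of $X$, start of $Y$) with start from $X$ and accept from $Y$. A linear category is a bipointed d-category isomorphic to a finite (possibly empty) concatenation (gluing $\top$ to $\bot$) of $\mathbf S$ (formorphism $\bot\to\top$), $\mathbf T$ (backmorphism $\top\to\bot$), $\mathbf I$ (inverse pair); a path is a d-functor $\omega:\mathcal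 I\to\mathcal{C}$ from one; its track object is $\operatorname{colim}_i\mathcal{C}(-,\omega(i))$ with start element image of $\mathrm{id}_{\omega(\bot)}$, accept element image of $\mathrm{id}_{\omega(\top)}$; track objects are automata isomorphic to such. $\Delta\sqsubseteq\Gamma$ if there is an automaton morphism $\Delta\to\Gamma$. A $\mathcal{C}$-language is a class of track objects down-closed under $\sqsubseteq$; $A{\downarrow}$ is down-closure. $\iota_U$: $\mathcal{C}(-,U)$ with start and accept $\mathrm{id}_U$; $1_{\mathcal{C}}=\{\iota_U\}{\downarrow}$. Operations: $L+M=L\cup M$; $L*M=\{\Gamma*\Delta\mid\Gamma\in L,\Delta\in M,\mathrm{tgt}\Gamma=\mathrm{src}\Delta\}{\downarrow}$; $L^0=1_{\mathcal{C}}$, $L^{k+1}=L*L^k$, $L^+=\bigcup_{n\ge1}L^n$. Atomic languages are $\{\Gamma\}{\downarrow}$ for a track object $\Gamma$; $\mathrm{Rat}(\mathcal{C})$ is the smallest class of languages containing $\emptyset$ and all atomic languages and closed under $+$, $*$, $(-)^+$. *)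

theory Defs
  imports Main
begin

record ('o,'m) dcat =
  Ob :: "'o set"
  Mor :: "'m set"
  Dom :: "'m \<Rightarrow> 'o"
  Cod :: "'m \<Rightarrow> 'o"
  Idm :: "'o \<Rightarrow> 'm"
  Comp :: "'m \<Rightarrow> 'm \<Rightarrow> 'm"   (* Comp g f = g \<circ> f, defined when Cod f = Dom g *)
  Plus :: "'m set"
  Minus :: "'m set"

definition is_category :: "('o,'m,'x) dcat_scheme \<Rightarrow> bool" where
  "is_category C \<longleftrightarrow>
     (\<forall>f\<in>Mor C. Dom C f \<in> Ob C \<and> Cod C f \<in> Ob C)
   \<and> (\<forall>U\<in>Ob C. Idm C U \<in> Mor C \<and> Dom C (Idm C U) = U \<and> Cod C (Idm C U) = U)
   \<and> (\<forall>f\<in>Mor C. \<forall>g\<in>Mor C. Cod C f = Dom C g \<longrightarrow>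
        Comp C g f \<in> Mor C \<and> Dom C (Comp C g f) = Dom C f \<and> Cod C (Comp C g f) = Cod C g)
   \<and> (\<forall>f\<in>Mor C. Comp C f (Idm C (Dom C f)) = f \<and> Comp C (Idm C (Cod C f)) f = f)
   \<and> (\<forall>f\<in>Mor C. \<forall>g\<in>Mor C. \<forall>h\<in>Mor C. Cod C f = Dom C g \<longrightarrow> Cod C g = Dom C h \<longrightarrow>
        Comp C h (Comp C g f) = Comp C (Comp C h g) f)"

definition inverse_pair :: "('o,'m,'x) dcat_scheme \<Rightarrow> 'm \<Rightarrow> 'm \<Rightarrow> bool" where
  "inverse_pair C f g \<longleftrightarrow> f \<in> Mor C \<and> g \<in> Mor C \<and> Dom C g = Cod C f \<and> Cod C g = Dom C f
     \<and> Comp C g f = Idm C (Dom C f) \<and> Comp C f g = Idm C (Cod C f)"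

definition wide_subcat :: "('o,'m,'x) dcat_scheme \<Rightarrow> 'm set \<Rightarrow> bool" where
  "wide_subcat C S \<longleftrightarrow> S \<subseteq> Mor C \<and> (\<forall>U\<in>Ob C. Idm C U \<in> S)
     \<and> (\<forall>f\<in>S. \<forall>g\<in>S. Cod C f = Dom C g \<longrightarrow> Comp C g f \<in> S)"

definition is_dcat :: "('o,'m,'x) dcat_scheme \<Rightarrow> bool" where
  "is_dcat C \<longleftrightarrow> is_category C \<and> wide_subcat C (Plus C) \<and> wide_subcat C (Minus C)
     \<and> (\<forall>f g. inverse_pair C f g \<longrightarrow> (f \<in> Plus C \<longleftrightarrow> g \<in> Minus C))"

section \<open>Automata (presheaves with start and accept elements)\<close>

text \<open>A presheaf is given by its set of elements, the object each element lies over,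
  and the restriction action: for x over U and f : V -> U, Act x f is the element x.f over V.\<close>

record ('o,'m,'e) autom =
  Elts :: "'e set"
  Over :: "'e \<Rightarrow> 'o"
  Act :: "'e \<Rightarrow> 'm \<Rightarrow> 'e"
  Start :: "'e set"
  Acc :: "'e set"

definition is_autom :: "('o,'m,'x) dcat_scheme \<Rightarrow> ('o,'m,'e) autom \<Rightarrow> bool" where
  "is_autom C X \<longleftrightarrow>
     (\<forall>x\<in>Elts X. Over X x \<in> Ob C)
   \<and> (\<forall>x\<in>Elts X. \<forall>f\<in>Mor C. Cod C f = Over X x \<longrightarrow>
        Act X x f \<in> Elts X \<and> Over X (Act X x f) = Dom C f)
   \<and> (\<forall>x\<in>Elts X. Act X x (Idm C (Over X x)) = x)
   \<and> (\<forall>x\<in>Elts X. \<forall>f\<in>Mor C. \<forall>g\<in>Mor C. Cod C f = Over X x \<longrightarrow> Cod C g = Dom C f \<longrightarrow>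
        Act X (Act X x f) g = Act X x (Comp C f g))
   \<and> Start X \<subseteq> Elts X \<and> Acc X \<subseteq> Elts X"

definition amor :: "('o,'m,'x) dcat_scheme \<Rightarrow> ('o,'m,'e) autom \<Rightarrow> ('o,'m,'f) autom
    \<Rightarrow> ('e \<Rightarrow> 'f) \<Rightarrow> bool" where
  "amor C X Y h \<longleftrightarrow>
     (\<forall>x\<in>Elts X. h x \<in> Elts Y \<and> Over Y (h x) = Over X x)
   \<and> (\<forall>x\<in>Elts X. \<forall>f\<in>Mor C. Cod C f = Over X x \<longrightarrow> h (Act X x f) = Act Y (h x) f)
   \<and> h ` Start X \<subseteq> Start Y \<and> h ` Acc X \<subseteq> Acc Y"

definition aiso :: "('o,'m,'x) dcat_scheme \<Rightarrow> ('o,'m,'e) autom \<Rightarrow> ('o,'m,'f) autom \<Rightarrow> bool" where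
  "aiso C X Y \<longleftrightarrow> (\<exists>h k. amor C X Y h \<and> amor C Y X k
      \<and> (\<forall>x\<in>Elts X. k (h x) = x) \<and> (\<forall>y\<in>Elts Y. h (k y) = y))"

definition aleq :: "('o,'m,'x) dcat_scheme \<Rightarrow> ('o,'m,'e) autom \<Rightarrow> ('o,'m,'f) autom \<Rightarrow> bool" where
  "aleq C D G \<longleftrightarrow> (\<exists>h. amor C D G h)"

definition src :: "('o,'m,'e) autom \<Rightarrow> 'o" where
  "src X = Over X (the_elem (Start X))"

definition tgt :: "('o,'m,'e) autom \<Rightarrow> 'o" where
  "tgt X = Over X (the_elem (Acc X))"

section \<open>Gluing X * Y (pushout of X <- C(-,U) -> Y)\<close>

definition glue_rel :: "('o,'m,'x) dcat_scheme \<Rightarrow> ('o,'m,'e) autom \<Rightarrow> ('o,'m,'e) autom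
    \<Rightarrow> ('e + 'e) rel" where
  "glue_rel C X Y =
     (let D = Inl ` Elts X \<union> Inr ` Elts Y;
          R = {(Inl (Act X (the_elem (Acc X)) f), Inr (Act Y (the_elem (Start Y)) f)) | f.
                 f \<in> Mor C \<and> Cod C f = tgt X}
      in (R \<union> R\<inverse>)\<^sup>* \<inter> (D \<times> D))"

definition glue :: "('o,'m,'x) dcat_scheme \<Rightarrow> ('o,'m,'e) autom \<Rightarrow> ('o,'m,'e) autom
    \<Rightarrow> ('o,'m,('e + 'e) set) autom" where
  "glue C X Y =
     (let E = glue_rel C X Y;
          ov = case_sum (Over X) (Over Y);
          ac = (\<lambda>z f. case z of Inl x \<Rightarrow> Inl (Act X x f) | Inr y \<Rightarrow> Inr (Act Y y f))
      in \<lparr> Elts = (Inl ` Elts X \<union> Inr ` Elts Y) // E,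
           Over = (\<lambda>c. ov (SOME z. z \<in> c)),
           Act = (\<lambda>c f. E `` {ac (SOME z. z \<in> c) f}),
           Start = (\<lambda>x. E `` {Inl x}) ` Start X,
           Acc = (\<lambda>y. E `` {Inr y}) ` Acc Y \<rparr>)"

text \<open>A linear category is a finite concatenation of the generators S (formorphism bot -> top),
  T (backmorphism top -> bot) and I (inverse pair, bot -> top a formorphism, its inverse a
  backmorphism). It is encoded by the word of generators; its objects are 0..n (n = length).
  A path (d-functor) is determined by the images of the objects and of the generating morphisms.\<close>

datatype lgen = S | T | I

type_synonym ('o,'m) path = "lgen list \<times> (nat \<Rightarrow> 'o) \<times> (nat \<Rightarrow> 'm)"

definition is_path :: "('o,'m,'x) dcat_scheme \<Rightarrow> ('o,'m) path \<Rightarrow> bool" where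
  "is_path C p \<longleftrightarrow> (case p of (w, ob, mo) \<Rightarrow>
     (\<forall>i\<le>length w. ob i \<in> Ob C)
   \<and> (\<forall>k<length w.
        (w!k = S \<longrightarrow> mo k \<in> Plus C \<and> Dom C (mo k) = ob k \<and> Cod C (mo k) = ob (Suc k))
      \<and> (w!k = T \<longrightarrow> mo k \<in> Minus C \<and> Dom C (mo k) = ob (Suc k) \<and> Cod C (mo k) = ob k)
      \<and> (w!k = I \<longrightarrow> mo k \<in> Plus C \<and> Dom C (mo k) = ob k \<and> Cod C (mo k) = ob (Suc k)
                    \<and> (\<exists>g. inverse_pair C (mo k) g \<and> g \<in> Minus C))))"

type_synonym 'm trk = "(nat \<times> 'm) set"

definition track_rel :: "('o,'m,'x) dcat_scheme \<Rightarrow> ('o,'m) path \<Rightarrow> (nat \<times> 'm) rel" where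
  "track_rel C p = (case p of (w, ob, mo) \<Rightarrow>
     (let D = {(i, g). i \<le> length w \<and> g \<in> Mor C \<and> Cod C g = ob i};
          R = {((k, g), (Suc k, Comp C (mo k) g)) | k g.
                  k < length w \<and> w!k \<in> {S, I} \<and> g \<in> Mor C \<and> Cod C g = ob k}
            \<union> {((Suc k, g), (k, Comp C (mo k) g)) | k g.
                  k < length w \<and> w!k = T \<and> g \<in> Mor C \<and> Cod C g = ob (Suc k)}
      in (R \<union> R\<inverse>)\<^sup>* \<inter> (D \<times> D)))"

text \<open>The track object colim_i C(-, omega(i)), computed pointwise as a quotient.\<close>
definition track :: "('o,'m,'x) dcat_scheme \<Rightarrow> ('o,'m) path \<Rightarrow> ('o,'m,'m trk) autom" where
  "track C p = (case p of (w, ob, mo) \<Rightarrow>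
     (let E = track_rel C p
      in \<lparr> Elts = {(i, g). i \<le> length w \<and> g \<in> Mor C \<and> Cod C g = ob i} // E,
           Over = (\<lambda>c. Dom C (snd (SOME z. z \<in> c))),
           Act = (\<lambda>c f. (let z = (SOME z. z \<in> c) in E `` {(fst z, Comp C (snd z) f)})),
           Start = {E `` {(0, Idm C (ob 0))}},
           Acc = {E `` {(length w, Idm C (ob (length w)))}} \<rparr>))"

definition is_track :: "('o,'m,'x) dcat_scheme \<Rightarrow> ('o,'m,'e) autom \<Rightarrow> bool" where
  "is_track C X \<longleftrightarrow> is_autom C X \<and> (\<exists>p. is_path C p \<and> aiso C X (track C p))"

text \<open>Languages are iso-closed classes of track objects; we represent a class by its members
  whose carrier is of the type \<open>'m trk\<close> (which contains an isomorphic copy of every track object).\<close>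

type_synonym ('o,'m) lang = "('o,'m,'m trk) autom set"

definition is_lang :: "('o,'m,'x) dcat_scheme \<Rightarrow> ('o,'m) lang \<Rightarrow> bool" where
  "is_lang C L \<longleftrightarrow> (\<forall>G\<in>L. is_track C G)
     \<and> (\<forall>G\<in>L. \<forall>D. is_track C D \<and> aleq C D G \<longrightarrow> D \<in> L)"

definition down :: "('o,'m,'x) dcat_scheme \<Rightarrow> ('o,'m,'e) autom set \<Rightarrow> ('o,'m) lang" where
  "down C A = {D. is_track C D \<and> (\<exists>G\<in>A. aleq C D G)}"

definition iota :: "('o,'m,'x) dcat_scheme \<Rightarrow> 'o \<Rightarrow> ('o,'m,'m) autom" where
  "iota C U = \<lparr> Elts = {g \<in> Mor C. Cod C g = U}, Over = Dom C, Act = Comp C,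
                Start = {Idm C U}, Acc = {Idm C U} \<rparr>"

definition one_lang :: "('o,'m,'x) dcat_scheme \<Rightarrow> ('o,'m) lang" where
  "one_lang C = down C (iota C ` Ob C)"

definition lplus :: "('o,'m) lang \<Rightarrow> ('o,'m) lang \<Rightarrow> ('o,'m) lang" where
  "lplus L M = L \<union> M"

definition ltimes :: "('o,'m,'x) dcat_scheme \<Rightarrow> ('o,'m) lang \<Rightarrow> ('o,'m) lang \<Rightarrow> ('o,'m) lang" where
  "ltimes C L M = down C {glue C G D | G D. G \<in> L \<and> D \<in> M \<and> tgt G = src D}"

fun lpow :: "('o,'m,'x) dcat_scheme \<Rightarrow> ('o,'m) lang \<Rightarrow> nat \<Rightarrow> ('o,'m) lang" where
  "lpow C L 0 = one_lang C"
| "lpow C L (Suc k) = ltimes C L (lpow C L k)"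

definition lstar_plus :: "('o,'m,'x) dcat_scheme \<Rightarrow> ('o,'m) lang \<Rightarrow> ('o,'m) lang" where
  "lstar_plus C L = (\<Union>n\<in>{1..}. lpow C L n)"

inductive_set Rat :: "('o,'m,'x) dcat_scheme \<Rightarrow> ('o,'m) lang set" for C where
  Rat_empty: "{} \<in> Rat C"
| Rat_atom: "is_track C (G :: ('o,'m,'m trk) autom) \<Longrightarrow> down C {G} \<in> Rat C"
| Rat_plus: "L \<in> Rat C \<Longrightarrow> M \<in> Rat C \<Longrightarrow> lplus L M \<in> Rat C"
| Rat_times: "L \<in> Rat C \<Longrightarrow> M \<in> Rat C \<Longrightarrow> ltimes C L M \<in> Rat C"
| Rat_splus: "L \<in> Rat C \<Longrightarrow> lstar_plus C L \<in> Rat C"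

end

theory Submission
  imports Defs
begin

lemma catD:
  assumes "is_category C"
  shows cat_dc: "\<And>f. f\<in>Mor C \<Longrightarrow> Dom C f \<in> Ob C \<and> Cod C f \<in> Ob C"
  and cat_id: "\<And>U. U\<in>Ob C \<Longrightarrow> Idm C U \<in> Mor C \<and> Dom C (Idm C U) = U \<and> Cod C (Idm C U) = U"
  and cat_comp: "\<And>f g. f\<in>Mor C \<Longrightarrow> g\<in>Mor C \<Longrightarrow> Cod C f = Dom C g \<Longrightarrow>
        Comp C g f \<in> Mor C \<and> Dom C (Comp C g f) = Dom C f \<and> Cod C (Comp C g f) = Cod C g"
  and cat_idr: "\<And>f. f\<in>Mor C \<Longrightarrow> Comp C f (Idm C (Dom C f)) = f"
  and cat_idl: "\<And>f. f\<in>Mor C \<Longrightarrow> Comp C (Idm C (Cod C f)) f = f"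
  and cat_assoc: "\<And>f g h. f\<in>Mor C \<Longrightarrow> g\<in>Mor C \<Longrightarrow> h\<in>Mor C \<Longrightarrow> Cod C f = Dom C g \<Longrightarrow> Cod C g = Dom C h \<Longrightarrow>
        Comp C h (Comp C g f) = Comp C (Comp C h g) f"
  using assms unfolding is_category_def by blast+

lemma autD:
  assumes "is_autom C X"
  shows aut_ob: "\<And>x. x\<in>Elts X \<Longrightarrow> Over X x \<in> Ob C"
  and aut_act: "\<And>x f. x\<in>Elts X \<Longrightarrow> f\<in>Mor C \<Longrightarrow> Cod C f = Over X x \<Longrightarrow>
        Act X x f \<in> Elts X \<and> Over X (Act X x f) = Dom C f"
  and aut_id: "\<And>x. x\<in>Elts X \<Longrightarrow> Act X x (Idm C (Over X x)) = x"
  and aut_comp: "\<And>x f g. x\<in>Elts X \<Longrightarrow> f\<in>Mor C \<Longrightarrow> g\<in>Mor C \<Longrightarrow> Cod C f = Over X x \<Longrightarrow> Cod C g = Dom C f \<Longrightarrow>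
        Act X (Act X x f) g = Act X x (Comp C f g)"
  and aut_start: "Start X \<subseteq> Elts X" and aut_acc: "Acc X \<subseteq> Elts X"
  using assms unfolding is_autom_def by blast+

definition pm :: "('o,'m,'x) dcat_scheme \<Rightarrow> ('o,'m,'e) autom \<Rightarrow> ('o,'m,'f) autom
    \<Rightarrow> ('e \<Rightarrow> 'f) \<Rightarrow> bool" where
  "pm C X Y h \<longleftrightarrow>
     (\<forall>x\<in>Elts X. h x \<in> Elts Y \<and> Over Y (h x) = Over X x)
   \<and> (\<forall>x\<in>Elts X. \<forall>f\<in>Mor C. Cod C f = Over X x \<longrightarrow> h (Act X x f) = Act Y (h x) f)"

lemma amor_pm: "amor C X Y h \<longleftrightarrow> pm C X Y h \<and> h ` Start X \<subseteq> Start Y \<and> h ` Acc X \<subseteq> Acc Y"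
  unfolding amor_def pm_def by blast

lemma pmD: assumes "pm C X Y h"
  shows "\<And>x. x\<in>Elts X \<Longrightarrow> h x \<in> Elts Y" "\<And>x. x\<in>Elts X \<Longrightarrow> Over Y (h x) = Over X x"
  "\<And>x f. x\<in>Elts X \<Longrightarrow> f\<in>Mor C \<Longrightarrow> Cod C f = Over X x \<Longrightarrow> h (Act X x f) = Act Y (h x) f"
  using assms unfolding pm_def by blast+

lemma pm_comp: "pm C X Y h \<Longrightarrow> pm C Y Z k \<Longrightarrow> pm C X Z (k \<circ> h)"
  unfolding pm_def by auto

lemma pm_id: "pm C X X id"
  unfolding pm_def by auto

lemma amor_comp: "amor C X Y h \<Longrightarrow> amor C Y Z k \<Longrightarrow> amor C X Z (k \<circ> h)"
  unfolding amor_def by (auto simp: image_subset_iff)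

lemma aleq_trans: "aleq C X Y \<Longrightarrow> aleq C Y Z \<Longrightarrow> aleq C X Z"
  unfolding aleq_def using amor_comp by blast

lemma amor_id: "amor C X X id"
  unfolding amor_def by auto

section \<open>Generic quotients\<close>

definition qE :: "'e set \<Rightarrow> 'e rel \<Rightarrow> 'e rel" where
  "qE D R = (R \<union> R\<inverse>)\<^sup>* \<inter> D \<times> D"

definition qA :: "'e set \<Rightarrow> ('e \<Rightarrow> 'o) \<Rightarrow> ('e \<Rightarrow> 'm \<Rightarrow> 'e) \<Rightarrow> 'e rel \<Rightarrow> 'e set set \<Rightarrow> 'e set set
   \<Rightarrow> ('o,'m,'e set) autom" where
  "qA D ov ac R St Ac = \<lparr> Elts = D // qE D R, Over = (\<lambda>c. ov (SOME z. z \<in> c)),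
     Act = (\<lambda>c f. qE D R `` {ac (SOME z. z \<in> c) f}), Start = St, Acc = Ac \<rparr>"

locale qpre =
  fixes C :: "('o,'m,'x) dcat_scheme" and D :: "'e set" and ov :: "'e \<Rightarrow> 'o"
    and ac :: "'e \<Rightarrow> 'm \<Rightarrow> 'e" and R :: "'e rel"
  assumes cat: "is_category C"
  and ov_ob: "\<And>z. z\<in>D \<Longrightarrow> ov z \<in> Ob C"
  and ac_D: "\<And>z f. z\<in>D \<Longrightarrow> f\<in>Mor C \<Longrightarrow> Cod C f = ov z \<Longrightarrow> ac z f \<in> D"
  and ac_ov: "\<And>z f. z\<in>D \<Longrightarrow> f\<in>Mor C \<Longrightarrow> Cod C f = ov z \<Longrightarrow> ov (ac z f) = Dom C f"
  and ac_id: "\<And>z. z\<in>D \<Longrightarrow> ac z (Idm C (ov z)) = z"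
  and ac_comp: "\<And>z f g. z\<in>D \<Longrightarrow> f\<in>Mor C \<Longrightarrow> g\<in>Mor C \<Longrightarrow> Cod C f = ov z \<Longrightarrow> Cod C g = Dom C f
      \<Longrightarrow> ac (ac z f) g = ac z (Comp C f g)"
  and R_ov: "\<And>z z'. (z,z')\<in>R \<Longrightarrow> ov z = ov z'"
  and R_ac: "\<And>z z' f. (z,z')\<in>R \<Longrightarrow> f\<in>Mor C \<Longrightarrow> Cod C f = ov z \<Longrightarrow> (ac z f, ac z' f) \<in> R"
begin

abbreviation "E \<equiv> qE D R"

lemma chain: "(z,z')\<in>(R\<union>R\<inverse>)\<^sup>* \<Longrightarrow> ov z' = ov z \<and> (\<forall>f\<in>Mor C. Cod C f = ov z \<longrightarrow> (ac z f, ac z' f) \<in> (R\<union>R\<inverse>)\<^sup>*)"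
proof (induction rule: rtrancl_induct)
  case base
  then show ?case by auto
next
  case (step y z')
  from step.hyps(2) have o: "ov z' = ov y" using R_ov by auto
  show ?case
  proof (intro conjI ballI impI)
    show "ov z' = ov z" using o step.IH by simp
  next
    fix f assume f: "f\<in>Mor C" "Cod C f = ov z"
    have "(ac y f, ac z' f) \<in> R\<union>R\<inverse>"
      using step.hyps(2) R_ac[of y z' f] R_ac[of z' y f] f o step.IH by auto
    then show "(ac z f, ac z' f) \<in> (R\<union>R\<inverse>)\<^sup>*" using step.IH f by (meson rtrancl_into_rtrancl)
  qed
qed

lemma inv: "(z,z')\<in>(R\<union>R\<inverse>)\<^sup>* \<Longrightarrow> (\<And>a b. (a,b)\<in>R \<Longrightarrow> v a = v b) \<Longrightarrow> v z = v z'"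
  by (induction rule: rtrancl_induct) auto

lemma equivE: "equiv D E"
proof -
  have s: "sym ((R\<union>R\<inverse>)\<^sup>*)" by (simp add: sym_Un_converse sym_rtrancl)
  show ?thesis unfolding equiv_def qE_def refl_on_def sym_def trans_def
    using s unfolding sym_def by (auto intro: rtrancl_trans)
qed

lemma cls_in: "z\<in>D \<Longrightarrow> z \<in> E``{z}"
  unfolding qE_def by auto

lemma cls_quot: "z\<in>D \<Longrightarrow> E``{z} \<in> D // E"
  by (rule quotientI)

lemma mem_cls: "z\<in>E``{z0} \<Longrightarrow> z\<in>D \<and> z0 \<in> D \<and> (z0,z)\<in>(R\<union>R\<inverse>)\<^sup>*"
  unfolding qE_def by auto

lemma some_cls: "z0\<in>D \<Longrightarrow> (SOME z. z \<in> E``{z0}) \<in> E``{z0}"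
  by (rule someI, rule cls_in)

lemma cls_eq: "z\<in>E``{z0} \<Longrightarrow> E``{z} = E``{z0}"
  using equivE by (metis equiv_class_eq_iff Image_singleton_iff)

lemma Over_cls: "z0\<in>D \<Longrightarrow> Over (qA D ov ac R St Ac) (E``{z0}) = ov z0"
  using some_cls[of z0] mem_cls chain unfolding qA_def by fastforce

lemma Act_cls: assumes "z0\<in>D" "f\<in>Mor C" "Cod C f = ov z0"
  shows "Act (qA D ov ac R St Ac) (E``{z0}) f = E``{ac z0 f}"
proof -
  define z where "z = (SOME z. z \<in> E``{z0})"
  have zc: "z \<in> E``{z0}" using some_cls assms z_def by simp
  then have zD: "z\<in>D" and ch: "(z0,z)\<in>(R\<union>R\<inverse>)\<^sup>*" using mem_cls by auto
  have "ov z = ov z0" using chain[OF ch] by simp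
  have "(ac z0 f, ac z f) \<in> (R\<union>R\<inverse>)\<^sup>*" using chain[OF ch] assms by auto
  moreover have "ac z0 f \<in> D" "ac z f \<in> D" using ac_D assms zD \<open>ov z = ov z0\<close> by auto
  ultimately have "ac z f \<in> E``{ac z0 f}" unfolding qE_def by auto
  then have "E``{ac z f} = E``{ac z0 f}" by (rule cls_eq)
  then show ?thesis unfolding qA_def z_def by simp
qed

lemma Elts_qA: "Elts (qA D ov ac R St Ac) = D // E" unfolding qA_def by simp

lemma quotE: assumes "c \<in> D // E" obtains z0 where "z0\<in>D" "c = E``{z0}"
  using assms by (rule quotientE)

lemma qA_autom: assumes "St \<subseteq> D // E" "Ac \<subseteq> D // E"
  shows "is_autom C (qA D ov ac R St Ac)"
  unfolding is_autom_def
proof (intro conjI ballI impI)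
  let ?Q = "qA D ov ac R St Ac"
  fix c assume "c \<in> Elts ?Q"
  then obtain z0 where z0: "z0\<in>D" "c = E``{z0}" unfolding Elts_qA by (rule quotE)
  show "Over ?Q c \<in> Ob C" using z0 Over_cls ov_ob by simp
  show "Act ?Q c (Idm C (Over ?Q c)) = c"
    using z0 Over_cls Act_cls ac_id ov_ob catD(2)[OF cat] by simp
  {
    fix f assume f: "f\<in>Mor C" "Cod C f = Over ?Q c"
    then have f': "Cod C f = ov z0" using z0 Over_cls by simp
    show "Act ?Q c f \<in> Elts ?Q" using z0 f f' Act_cls ac_D Elts_qA cls_quot by simp
    show "Over ?Q (Act ?Q c f) = Dom C f" using z0 f f' Act_cls ac_D Over_cls ac_ov by simp
    fix g assume g: "g\<in>Mor C" "Cod C g = Dom C f"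
    have a1: "ac z0 f \<in> D" "ov (ac z0 f) = Dom C f" using ac_D ac_ov z0 f f' by auto
    have cm: "Comp C f g \<in> Mor C" "Cod C (Comp C f g) = ov z0" using catD(3)[OF cat, of g f] f f' g by auto
    show "Act ?Q (Act ?Q c f) g = Act ?Q c (Comp C f g)"
      using z0 Act_cls[OF z0(1) f(1) f'] Act_cls[OF a1(1) g(1)] a1 g Act_cls[OF z0(1) cm] ac_comp[OF z0(1) f(1) g(1) f'] g
      by simp
  }
qed (use assms in \<open>auto simp: qA_def\<close>)

lemma qA_ev:
  assumes v3: "\<And>a b. (a,b)\<in>R \<Longrightarrow> v a = v b" and z: "z\<in>D"
  shows "v (SOME z'. z' \<in> E``{z}) = v z"
proof -
  have "(z, SOME z'. z' \<in> E``{z}) \<in> (R\<union>R\<inverse>)\<^sup>*" using some_cls[OF z] mem_cls by blast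
  then show ?thesis using inv[of z _ v] v3 by metis
qed

lemma qA_univ:
  assumes v1: "\<And>z. z\<in>D \<Longrightarrow> v z \<in> Elts W \<and> Over W (v z) = ov z"
  and v2: "\<And>z f. z\<in>D \<Longrightarrow> f\<in>Mor C \<Longrightarrow> Cod C f = ov z \<Longrightarrow> v (ac z f) = Act W (v z) f"
  and v3: "\<And>a b. (a,b)\<in>R \<Longrightarrow> v a = v b"
  shows "pm C (qA D ov ac R St Ac) W (\<lambda>c. v (SOME z. z\<in>c))"
    and "\<And>z. z\<in>D \<Longrightarrow> v (SOME z'. z' \<in> E``{z}) = v z"
proof -
  have ev: "v (SOME z'. z' \<in> E``{z}) = v z" if "z\<in>D" for z
  proof -
    have "(z, SOME z'. z' \<in> E``{z}) \<in> (R\<union>R\<inverse>)\<^sup>*" using some_cls[OF that] mem_cls by blast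
    then show ?thesis using inv[of z _ v] v3 by metis
  qed
  then show "\<And>z. z\<in>D \<Longrightarrow> v (SOME z'. z' \<in> E``{z}) = v z" .
  show "pm C (qA D ov ac R St Ac) W (\<lambda>c. v (SOME z. z\<in>c))"
    unfolding pm_def
  proof (intro conjI ballI impI)
    let ?Q = "qA D ov ac R St Ac"
    fix c assume "c \<in> Elts ?Q"
    then obtain z0 where z0: "z0\<in>D" "c = E``{z0}" unfolding Elts_qA by (rule quotE)
    show "v (SOME z. z\<in>c) \<in> Elts W" using ev v1 z0 by simp
    show "Over W (v (SOME z. z\<in>c)) = Over ?Q c" using ev v1 z0 Over_cls by simp
    fix f assume f: "f\<in>Mor C" "Cod C f = Over ?Q c"
    then have f': "Cod C f = ov z0" using z0 Over_cls by simp
    have "ac z0 f \<in> D" using ac_D z0 f f' by auto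
    then show "v (SOME z. z \<in> Act ?Q c f) = Act W (v (SOME z. z\<in>c)) f"
      using z0 Act_cls[OF z0(1) f(1) f'] ev v2 f f' by simp
  qed
qed

end


section \<open>Tracks\<close>

definition trD :: "('o,'m,'x) dcat_scheme \<Rightarrow> ('o,'m) path \<Rightarrow> (nat \<times> 'm) set" where
  "trD C p = (case p of (w, ob, mo) \<Rightarrow> {(i, g). i \<le> length w \<and> g \<in> Mor C \<and> Cod C g = ob i})"

definition trR :: "('o,'m,'x) dcat_scheme \<Rightarrow> ('o,'m) path \<Rightarrow> (nat \<times> 'm) rel" where
  "trR C p = (case p of (w, ob, mo) \<Rightarrow>
     {((k, g), (Suc k, Comp C (mo k) g)) | k g.
                  k < length w \<and> w!k \<in> {S, I} \<and> g \<in> Mor C \<and> Cod C g = ob k}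
            \<union> {((Suc k, g), (k, Comp C (mo k) g)) | k g.
                  k < length w \<and> w!k = T \<and> g \<in> Mor C \<and> Cod C g = ob (Suc k)})"

definition tc :: "('o,'m,'x) dcat_scheme \<Rightarrow> ('o,'m) path \<Rightarrow> nat \<Rightarrow> 'm trk" where
  "tc C p i = track_rel C p `` {(i, Idm C (fst (snd p) i))}"

lemma track_rel_qE: "track_rel C p = qE (trD C p) (trR C p)"
  by (cases p) (simp add: track_rel_def qE_def trD_def trR_def Let_def)

lemma track_qA: "track C (w,ob,mo) = qA (trD C (w,ob,mo)) (\<lambda>z. Dom C (snd z)) (\<lambda>z f. (fst z, Comp C (snd z) f))
   (trR C (w,ob,mo)) {tc C (w,ob,mo) 0} {tc C (w,ob,mo) (length w)}"
  by (simp add: track_def qA_def track_rel_qE tc_def Let_def trD_def)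

lemma dcat_cat: "is_dcat C \<Longrightarrow> is_category C"
  unfolding is_dcat_def by simp

lemma pathD:
  assumes "is_dcat C" "is_path C (w,ob,mo)"
  shows "\<And>i. i \<le> length w \<Longrightarrow> ob i \<in> Ob C"
   and "\<And>k. k < length w \<Longrightarrow> mo k \<in> Mor C"
   and "\<And>k. k < length w \<Longrightarrow> w!k \<noteq> T \<Longrightarrow> Dom C (mo k) = ob k \<and> Cod C (mo k) = ob (Suc k)"
   and "\<And>k. k < length w \<Longrightarrow> w!k = T \<Longrightarrow> Dom C (mo k) = ob (Suc k) \<and> Cod C (mo k) = ob k"
proof -
  have pm: "Plus C \<subseteq> Mor C" "Minus C \<subseteq> Mor C" using assms(1) unfolding is_dcat_def wide_subcat_def by auto
  show "\<And>i. i \<le> length w \<Longrightarrow> ob i \<in> Ob C" using assms(2) unfolding is_path_def by auto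
  show "\<And>k. k < length w \<Longrightarrow> mo k \<in> Mor C"
  proof -
    fix k assume k: "k < length w"
    show "mo k \<in> Mor C" using assms(2) k pm unfolding is_path_def by (cases "w!k") auto
  qed
  show "\<And>k. k < length w \<Longrightarrow> w!k \<noteq> T \<Longrightarrow> Dom C (mo k) = ob k \<and> Cod C (mo k) = ob (Suc k)"
  proof -
    fix k assume k: "k < length w" "w!k \<noteq> T"
    show "Dom C (mo k) = ob k \<and> Cod C (mo k) = ob (Suc k)" using assms(2) k unfolding is_path_def by (cases "w!k") auto
  qed
  show "\<And>k. k < length w \<Longrightarrow> w!k = T \<Longrightarrow> Dom C (mo k) = ob (Suc k) \<and> Cod C (mo k) = ob k"
    using assms(2) unfolding is_path_def by auto
qed

lemma SI_iff: "(x \<in> {S, I}) = (x \<noteq> T)" by (cases x) auto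

lemma trR_cases:
  assumes "(z,z') \<in> trR C (w,ob,mo)"
  obtains (1) k g where "z = (k,g)" "z' = (Suc k, Comp C (mo k) g)" "k < length w" "w!k \<noteq> T" "g \<in> Mor C" "Cod C g = ob k"
   | (2) k g where "z = (Suc k,g)" "z' = (k, Comp C (mo k) g)" "k < length w" "w!k = T" "g \<in> Mor C" "Cod C g = ob (Suc k)"
  using assms unfolding trR_def SI_iff by auto

lemma tr_qpre:
  assumes dc: "is_dcat C" and p: "is_path C (w,ob,mo)"
  shows "qpre C (trD C (w,ob,mo)) (\<lambda>z. Dom C (snd z)) (\<lambda>z f. (fst z, Comp C (snd z) f)) (trR C (w,ob,mo))"
proof -
  have cat: "is_category C" using dc dcat_cat by blast
  note c = catD[OF cat]
  note pd = pathD[OF dc p]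
  show ?thesis
  proof (unfold_locales)
    show "is_category C" by fact
  next
    fix z assume "z \<in> trD C (w,ob,mo)" then show "Dom C (snd z) \<in> Ob C" using c(1) by (auto simp: trD_def)
  next
    fix z f assume "z \<in> trD C (w,ob,mo)" "f \<in> Mor C" "Cod C f = Dom C (snd z)"
    then show "(fst z, Comp C (snd z) f) \<in> trD C (w, ob, mo)" and "Dom C (snd (fst z, Comp C (snd z) f)) = Dom C f"
      using c(3) by (auto simp: trD_def)
  next
    fix z assume "z \<in> trD C (w,ob,mo)" then show "(fst z, Comp C (snd z) (Idm C (Dom C (snd z)))) = z"
      using c(4) by (auto simp: trD_def)
  next
    fix z f g assume "z \<in> trD C (w,ob,mo)" "f \<in> Mor C" "g \<in> Mor C" "Cod C f = Dom C (snd z)" "Cod C g = Dom C f"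
    then show "(fst (fst z, Comp C (snd z) f), Comp C (snd (fst z, Comp C (snd z) f)) g) = (fst z, Comp C (snd z) (Comp C f g))"
      using c(6) by (auto simp: trD_def)
  next
    fix z z' assume "(z,z') \<in> trR C (w,ob,mo)"
    then show "Dom C (snd z) = Dom C (snd z')"
    proof (cases rule: trR_cases)
      case (1 k g)
      then show ?thesis using c(3)[of g "mo k"] pd(2,3)[of k] by simp
    next
      case (2 k g)
      then show ?thesis using c(3)[of g "mo k"] pd(2,4)[of k] by simp
    qed
  next
    fix z z' f assume zz: "(z,z') \<in> trR C (w,ob,mo)" and f: "f \<in> Mor C" "Cod C f = Dom C (snd z)"
    from zz show "((fst z, Comp C (snd z) f), (fst z', Comp C (snd z') f)) \<in> trR C (w,ob,mo)"
    proof (cases rule: trR_cases)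
      case (1 k g)
      note * = this
      have "Comp C (Comp C (mo k) g) f = Comp C (mo k) (Comp C g f)" using c(6)[of f g "mo k"] * f pd(2,3,4)[of k] by auto
      moreover have "Comp C g f \<in> Mor C \<and> Cod C (Comp C g f) = ob k" using c(3)[of f g] * f by auto
      ultimately show ?thesis using * unfolding trR_def SI_iff by simp
    next
      case (2 k g)
      note * = this
      have "Comp C (Comp C (mo k) g) f = Comp C (mo k) (Comp C g f)" using c(6)[of f g "mo k"] * f pd(2,3,4)[of k] by auto
      moreover have "Comp C g f \<in> Mor C \<and> Cod C (Comp C g f) = ob (Suc k)" using c(3)[of f g] * f by auto
      ultimately show ?thesis using * unfolding trR_def SI_iff by simp
    qed
  qed
qed


definition fam_ok :: "('o,'m,'x) dcat_scheme \<Rightarrow> lgen list \<Rightarrow> (nat \<Rightarrow> 'o) \<Rightarrow> (nat \<Rightarrow> 'm)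
   \<Rightarrow> ('o,'m,'e) autom \<Rightarrow> (nat \<Rightarrow> 'e) \<Rightarrow> bool" where
  "fam_ok C w ob mo W x \<longleftrightarrow> (\<forall>i\<le>length w. x i \<in> Elts W \<and> Over W (x i) = ob i)
    \<and> (\<forall>k<length w. (w!k \<noteq> T \<longrightarrow> Act W (x (Suc k)) (mo k) = x k) \<and> (w!k = T \<longrightarrow> Act W (x k) (mo k) = x (Suc k)))"

lemma tc_eq: "tc C (w,ob,mo) i = qE (trD C (w,ob,mo)) (trR C (w,ob,mo)) `` {(i, Idm C (ob i))}"
  by (simp add: tc_def track_rel_qE)

lemma trD_id: "is_dcat C \<Longrightarrow> is_path C (w,ob,mo) \<Longrightarrow> i \<le> length w \<Longrightarrow> (i, Idm C (ob i)) \<in> trD C (w,ob,mo)"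
proof -
  assume a: "is_dcat C" "is_path C (w,ob,mo)" "i \<le> length w"
  have "ob i \<in> Ob C" using pathD(1)[OF a(1,2) a(3)] .
  then show ?thesis using catD(2)[OF dcat_cat[OF a(1)]] a(3) by (simp add: trD_def)
qed

lemma tr_univ:
  assumes dc: "is_dcat C" and p: "is_path C (w,ob,mo)" and W: "is_autom C W" and fam: "fam_ok C w ob mo W x"
  shows "\<exists>u. pm C (track C (w,ob,mo)) W u \<and> (\<forall>i\<le>length w. u (tc C (w,ob,mo) i) = x i)"
proof -
  interpret Q: qpre C "trD C (w,ob,mo)" "\<lambda>z. Dom C (snd z)" "\<lambda>z f. (fst z, Comp C (snd z) f)" "trR C (w,ob,mo)"
    using tr_qpre[OF dc p] .
  note pd = pathD[OF dc p]
  note a = autD[OF W]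
  have cat: "is_category C" using dc dcat_cat by blast
  note c = catD[OF cat]
  have fx: "\<And>i. i \<le> length w \<Longrightarrow> x i \<in> Elts W \<and> Over W (x i) = ob i" using fam unfolding fam_ok_def by blast
  have fS: "\<And>k. k < length w \<Longrightarrow> w!k \<noteq> T \<Longrightarrow> Act W (x (Suc k)) (mo k) = x k" using fam unfolding fam_ok_def by blast
  have fT: "\<And>k. k < length w \<Longrightarrow> w!k = T \<Longrightarrow> Act W (x k) (mo k) = x (Suc k)" using fam unfolding fam_ok_def by blast
  define v where "v = (\<lambda>z. Act W (x (fst z)) (snd z))"
  have v1: "v z \<in> Elts W \<and> Over W (v z) = Dom C (snd z)" if "z \<in> trD C (w,ob,mo)" for z
    using that a(2) fx unfolding v_def trD_def by auto
  have v2: "v (fst z, Comp C (snd z) f) = Act W (v z) f"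
    if "z \<in> trD C (w,ob,mo)" "f \<in> Mor C" "Cod C f = Dom C (snd z)" for z f
    using that a(4) fx unfolding v_def trD_def by auto
  have v3: "v z = v z'" if "(z,z') \<in> trR C (w,ob,mo)" for z z'
    using that
  proof (cases rule: trR_cases)
    case (1 k g)
    have "Act W (x (Suc k)) (Comp C (mo k) g) = Act W (Act W (x (Suc k)) (mo k)) g"
      using a(4)[of "x (Suc k)" "mo k" g] fx[of "Suc k"] pd(2,3)[of k] 1 by simp
    then show ?thesis using 1 fS unfolding v_def by simp
  next
    case (2 k g)
    have "Act W (x k) (Comp C (mo k) g) = Act W (Act W (x k) (mo k)) g"
      using a(4)[of "x k" "mo k" g] fx[of "k"] pd(2,4)[of k] 2 by simp
    then show ?thesis using 2 fT unfolding v_def by simp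
  qed
  note U1 = Q.qA_univ(1)[where v=v and W=W and St="{tc C (w,ob,mo) 0}" and Ac="{tc C (w,ob,mo) (length w)}", OF v1 v2 v3]
  have U2: "v (SOME z'. z' \<in> Q.E``{z}) = v z" if "z \<in> trD C (w,ob,mo)" for z
    using Q.qA_ev[of v, OF _ that] v3 by blast
  show ?thesis
  proof (intro exI conjI allI impI)
    show "pm C (track C (w,ob,mo)) W (\<lambda>c. v (SOME z. z\<in>c))" unfolding track_qA by (rule U1)
    fix i assume i: "i \<le> length w"
    have "v (i, Idm C (ob i)) = x i" using a(3)[of "x i"] fx[OF i] unfolding v_def by simp
    then show "v (SOME z. z \<in> tc C (w,ob,mo) i) = x i" unfolding tc_eq using U2[OF trD_id[OF dc p i]] by simp
  qed
qed

lemma tr_autom: assumes dc: "is_dcat C" and p: "is_path C (w,ob,mo)"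
  shows "is_autom C (track C (w,ob,mo))"
proof -
  interpret Q: qpre C "trD C (w,ob,mo)" "\<lambda>z. Dom C (snd z)" "\<lambda>z f. (fst z, Comp C (snd z) f)" "trR C (w,ob,mo)"
    using tr_qpre[OF dc p] .
  show ?thesis unfolding track_qA
    by (rule Q.qA_autom) (auto simp: tc_eq intro!: Q.cls_quot trD_id[OF dc p])
qed

lemma tr_tc_elts: assumes dc: "is_dcat C" and p: "is_path C (w,ob,mo)" and i: "i \<le> length w"
  shows "tc C (w,ob,mo) i \<in> Elts (track C (w,ob,mo))"
    and "Over (track C (w,ob,mo)) (tc C (w,ob,mo) i) = ob i"
proof -
  interpret Q: qpre C "trD C (w,ob,mo)" "\<lambda>z. Dom C (snd z)" "\<lambda>z f. (fst z, Comp C (snd z) f)" "trR C (w,ob,mo)"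
    using tr_qpre[OF dc p] .
  show "tc C (w,ob,mo) i \<in> Elts (track C (w,ob,mo))"
    unfolding track_qA Q.Elts_qA tc_eq by (rule Q.cls_quot[OF trD_id[OF dc p i]])
  show "Over (track C (w,ob,mo)) (tc C (w,ob,mo) i) = ob i"
    unfolding track_qA tc_eq using Q.Over_cls[OF trD_id[OF dc p i]] catD(2)[OF dcat_cat[OF dc]] pathD(1)[OF dc p i] by simp
qed

lemma tr_compat: assumes dc: "is_dcat C" and p: "is_path C (w,ob,mo)"
  shows "fam_ok C w ob mo (track C (w,ob,mo)) (tc C (w,ob,mo))"
proof -
  interpret Q: qpre C "trD C (w,ob,mo)" "\<lambda>z. Dom C (snd z)" "\<lambda>z f. (fst z, Comp C (snd z) f)" "trR C (w,ob,mo)"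
    using tr_qpre[OF dc p] .
  note pd = pathD[OF dc p]
  have cat: "is_category C" using dc dcat_cat by blast
  note c = catD[OF cat]
  show ?thesis unfolding fam_ok_def
  proof (intro conjI allI impI)
    fix i assume "i \<le> length w"
    then show "tc C (w,ob,mo) i \<in> Elts (track C (w,ob,mo))" "Over (track C (w,ob,mo)) (tc C (w,ob,mo) i) = ob i"
      using tr_tc_elts[OF dc p] by auto
  next
    fix k assume k: "k < length w" "w!k \<noteq> T"
    have m: "mo k \<in> Mor C" "Dom C (mo k) = ob k" "Cod C (mo k) = ob (Suc k)" using pd(2,3) k by auto
    have d1: "(Suc k, Idm C (ob (Suc k))) \<in> trD C (w,ob,mo)" using trD_id[OF dc p] k by simp
    have cod: "Cod C (mo k) = Dom C (snd (Suc k, Idm C (ob (Suc k))))" using m c(2) pd(1)[of "Suc k"] k by simp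
    have cc: "Comp C (Idm C (ob (Suc k))) (mo k) = mo k" using c(5)[OF m(1)] m(3) by simp
    have "Act (track C (w,ob,mo)) (tc C (w,ob,mo) (Suc k)) (mo k) = Q.E `` {(Suc k, mo k)}"
      unfolding track_qA tc_eq using Q.Act_cls[OF d1 m(1) cod] cc by simp
    also have "\<dots> = tc C (w,ob,mo) k" unfolding tc_eq
    proof (rule Q.cls_eq)
      have "((k, Idm C (ob k)), (Suc k, Comp C (mo k) (Idm C (ob k)))) \<in> trR C (w,ob,mo)"
        using k c(2)[of "ob k"] pd(1)[of k] unfolding trR_def SI_iff by simp
      moreover have "Comp C (mo k) (Idm C (ob k)) = mo k" using c(4) m by metis
      moreover have "(Suc k, mo k) \<in> trD C (w,ob,mo)" using m k by (simp add: trD_def)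
      ultimately show "(Suc k, mo k) \<in> Q.E `` {(k, Idm C (ob k))}" using trD_id[OF dc p, of k] k
        unfolding qE_def by auto
    qed
    finally show "Act (track C (w,ob,mo)) (tc C (w,ob,mo) (Suc k)) (mo k) = tc C (w,ob,mo) k" .
  next
    fix k assume k: "k < length w" "w!k = T"
    have m: "mo k \<in> Mor C" "Dom C (mo k) = ob (Suc k)" "Cod C (mo k) = ob k" using pd(2,4) k by auto
    have d1: "(k, Idm C (ob k)) \<in> trD C (w,ob,mo)" using trD_id[OF dc p] k by simp
    have cod: "Cod C (mo k) = Dom C (snd (k, Idm C (ob k)))" using m c(2) pd(1)[of "k"] k by simp
    have cc: "Comp C (Idm C (ob k)) (mo k) = mo k" using c(5)[OF m(1)] m(3) by simp
    have "Act (track C (w,ob,mo)) (tc C (w,ob,mo) k) (mo k) = Q.E `` {(k, mo k)}"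
      unfolding track_qA tc_eq using Q.Act_cls[OF d1 m(1) cod] cc by simp
    also have "\<dots> = tc C (w,ob,mo) (Suc k)" unfolding tc_eq
    proof (rule Q.cls_eq)
      have "((Suc k, Idm C (ob (Suc k))), (k, Comp C (mo k) (Idm C (ob (Suc k))))) \<in> trR C (w,ob,mo)"
        using k c(2)[of "ob (Suc k)"] pd(1)[of "Suc k"] unfolding trR_def SI_iff by simp
      moreover have "Comp C (mo k) (Idm C (ob (Suc k))) = mo k" using c(4) m by metis
      moreover have "(k, mo k) \<in> trD C (w,ob,mo)" using m k by (simp add: trD_def)
      ultimately show "(k, mo k) \<in> Q.E `` {(Suc k, Idm C (ob (Suc k)))}" using trD_id[OF dc p, of "Suc k"] k
        unfolding qE_def by auto
    qed
    finally show "Act (track C (w,ob,mo)) (tc C (w,ob,mo) k) (mo k) = tc C (w,ob,mo) (Suc k)" .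
  qed
qed

lemma tr_start_acc: "Start (track C (w,ob,mo)) = {tc C (w,ob,mo) 0}" "Acc (track C (w,ob,mo)) = {tc C (w,ob,mo) (length w)}"
  unfolding track_qA qA_def by simp_all

lemma tr_src_tgt: assumes dc: "is_dcat C" and p: "is_path C (w,ob,mo)"
  shows "src (track C (w,ob,mo)) = ob 0" "tgt (track C (w,ob,mo)) = ob (length w)"
  unfolding src_def tgt_def tr_start_acc using tr_tc_elts(2)[OF dc p] by simp_all

lemma tr_is_track: assumes dc: "is_dcat C" and p: "is_path C (w,ob,mo)"
  shows "is_track C (track C (w,ob,mo))"
  unfolding is_track_def aiso_def using tr_autom[OF dc p] p amor_id by fastforce

lemma track_of:
  assumes dc: "is_dcat C" and G: "is_track C G"
  obtains w ob mo h k sG aG where "is_path C (w,ob,mo)" "is_autom C G" "pm C G (track C (w,ob,mo)) h"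
    "Start G = {sG}" "Acc G = {aG}" "h sG = tc C (w,ob,mo) 0" "h aG = tc C (w,ob,mo) (length w)"
    "src G = ob 0" "tgt G = ob (length w)"
    "pm C (track C (w,ob,mo)) G k" "k (tc C (w,ob,mo) 0) = sG" "k (tc C (w,ob,mo) (length w)) = aG"
proof -
  from G obtain p h k where p: "is_path C p" and hk: "amor C G (track C p) h" "amor C (track C p) G k"
    "\<forall>x\<in>Elts G. k (h x) = x" "\<forall>y\<in>Elts (track C p). h (k y) = y" and aut: "is_autom C G"
    unfolding is_track_def aiso_def by blast
  obtain w ob mo where pe: "p = (w,ob,mo)" by (cases p) auto
  note p = p[unfolded pe] and hk = hk[unfolded pe]
  let ?T = "track C (w,ob,mo)"
  have e0: "tc C (w,ob,mo) 0 \<in> Elts ?T" and el: "tc C (w,ob,mo) (length w) \<in> Elts ?T"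
    using tr_tc_elts[OF dc p] by auto
  have sG: "Start G = {k (tc C (w,ob,mo) 0)}"
  proof
    show "{k (tc C (w,ob,mo) 0)} \<subseteq> Start G" using hk(2) unfolding amor_def tr_start_acc by auto
    show "Start G \<subseteq> {k (tc C (w,ob,mo) 0)}"
    proof
      fix s assume s: "s \<in> Start G"
      then have "h s = tc C (w,ob,mo) 0" using hk(1) unfolding amor_def tr_start_acc by auto
      then show "s \<in> {k (tc C (w,ob,mo) 0)}" using hk(3) s autD(5)[OF aut] by force
    qed
  qed
  have aG: "Acc G = {k (tc C (w,ob,mo) (length w))}"
  proof
    show "{k (tc C (w,ob,mo) (length w))} \<subseteq> Acc G" using hk(2) unfolding amor_def tr_start_acc by auto
    show "Acc G \<subseteq> {k (tc C (w,ob,mo) (length w))}"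
    proof
      fix s assume s: "s \<in> Acc G"
      then have "h s = tc C (w,ob,mo) (length w)" using hk(1) unfolding amor_def tr_start_acc by auto
      then show "s \<in> {k (tc C (w,ob,mo) (length w))}" using hk(3) s autD(6)[OF aut] by force
    qed
  qed
  have pmh: "pm C G ?T h" using hk(1) amor_pm by blast
  have pmk: "pm C ?T G k" using hk(2) amor_pm by blast
  show ?thesis
  proof (rule that[OF p aut pmh sG aG _ _ _ _ pmk refl refl])
    show "h (k (tc C (w,ob,mo) 0)) = tc C (w,ob,mo) 0" using hk(4) e0 by blast
    show "h (k (tc C (w,ob,mo) (length w))) = tc C (w,ob,mo) (length w)" using hk(4) el by blast
    show "src G = ob 0" unfolding src_def sG using pmD(2)[OF pmk e0] tr_tc_elts(2)[OF dc p] by simp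
    show "tgt G = ob (length w)" unfolding tgt_def aG using pmD(2)[OF pmk el] tr_tc_elts(2)[OF dc p] by simp
  qed
qed


definition glD :: "('o,'m,'e) autom \<Rightarrow> ('o,'m,'e) autom \<Rightarrow> ('e+'e) set" where
  "glD X Y = Inl ` Elts X \<union> Inr ` Elts Y"
definition glR :: "('o,'m,'x) dcat_scheme \<Rightarrow> ('o,'m,'e) autom \<Rightarrow> ('o,'m,'e) autom \<Rightarrow> ('e+'e) rel" where
  "glR C X Y = {(Inl (Act X (the_elem (Acc X)) f), Inr (Act Y (the_elem (Start Y)) f)) | f.
                 f \<in> Mor C \<and> Cod C f = tgt X}"
definition glov :: "('o,'m,'e) autom \<Rightarrow> ('o,'m,'e) autom \<Rightarrow> 'e+'e \<Rightarrow> 'o" where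
  "glov X Y = case_sum (Over X) (Over Y)"
definition glac :: "('o,'m,'e) autom \<Rightarrow> ('o,'m,'e) autom \<Rightarrow> 'e+'e \<Rightarrow> 'm \<Rightarrow> 'e+'e" where
  "glac X Y = (\<lambda>z f. case z of Inl x \<Rightarrow> Inl (Act X x f) | Inr y \<Rightarrow> Inr (Act Y y f))"

lemma glue_rel_qE: "glue_rel C X Y = qE (glD X Y) (glR C X Y)"
  by (simp add: glue_rel_def qE_def glD_def glR_def Let_def)

lemma glue_qA: "glue C X Y = qA (glD X Y) (glov X Y) (glac X Y) (glR C X Y)
   ((\<lambda>x. glue_rel C X Y `` {Inl x}) ` Start X) ((\<lambda>y. glue_rel C X Y `` {Inr y}) ` Acc Y)"
  by (simp add: glue_def qA_def glue_rel_qE glD_def glov_def glac_def Let_def)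

locale gok =
  fixes C :: "('o,'m,'x) dcat_scheme" and X Y :: "('o,'m,'e) autom" and ax sy :: 'e
  assumes cat: "is_category C" and X: "is_autom C X" and Y: "is_autom C Y"
  and ax: "Acc X = {ax}" and sy: "Start Y = {sy}" and j: "Over X ax = Over Y sy"
begin

lemma tgtX: "tgt X = Over X ax" unfolding tgt_def ax by simp
lemma srcY: "src Y = Over Y sy" unfolding src_def sy by simp
lemma axE: "ax \<in> Elts X" using ax autD(6)[OF X] by auto
lemma syE: "sy \<in> Elts Y" using sy autD(5)[OF Y] by auto

lemma glR_eq: "glR C X Y = {(Inl (Act X ax f), Inr (Act Y sy f)) | f. f \<in> Mor C \<and> Cod C f = Over X ax}"
  unfolding glR_def ax sy tgtX by simp

lemma qp: "qpre C (glD X Y) (glov X Y) (glac X Y) (glR C X Y)"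
proof -
  note c = catD[OF cat]
  note aX = autD[OF X] and aY = autD[OF Y]
  show ?thesis
  proof (unfold_locales)
    show "is_category C" by (rule cat)
  next
    fix z assume "z \<in> glD X Y" then show "glov X Y z \<in> Ob C" using aX(1) aY(1) by (auto simp: glD_def glov_def)
  next
    fix z f assume "z \<in> glD X Y" "f \<in> Mor C" "Cod C f = glov X Y z"
    then show "glac X Y z f \<in> glD X Y" "glov X Y (glac X Y z f) = Dom C f"
      using aX(2) aY(2) by (auto simp: glD_def glov_def glac_def)
  next
    fix z assume "z \<in> glD X Y" then show "glac X Y z (Idm C (glov X Y z)) = z"
      using aX(3) aY(3) by (auto simp: glD_def glov_def glac_def)
  next
    fix z f g assume "z \<in> glD X Y" "f \<in> Mor C" "g \<in> Mor C" "Cod C f = glov X Y z" "Cod C g = Dom C f"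
    then show "glac X Y (glac X Y z f) g = glac X Y z (Comp C f g)"
      using aX(4) aY(4) by (auto simp: glD_def glov_def glac_def)
  next
    fix z z' assume "(z,z') \<in> glR C X Y"
    then obtain f where f: "f \<in> Mor C" "Cod C f = Over X ax" "z = Inl (Act X ax f)" "z' = Inr (Act Y sy f)"
      unfolding glR_eq by blast
    show "glov X Y z = glov X Y z'" using f aX(2)[OF axE f(1)] aY(2)[OF syE f(1)] j by (simp add: glov_def)
  next
    fix z z' g assume zz: "(z,z') \<in> glR C X Y" and g: "g \<in> Mor C" "Cod C g = glov X Y z"
    from zz obtain f where f: "f \<in> Mor C" "Cod C f = Over X ax" "z = Inl (Act X ax f)" "z' = Inr (Act Y sy f)"
      unfolding glR_eq by blast
    have g': "Cod C g = Dom C f" using g f aX(2)[OF axE f(1)] by (simp add: glov_def)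
    have e1: "Act X (Act X ax f) g = Act X ax (Comp C f g)" using aX(4)[OF axE f(1) g(1) f(2) g'] .
    have e2: "Act Y (Act Y sy f) g = Act Y sy (Comp C f g)" using aY(4)[OF syE f(1) g(1) _ g'] f(2) j by simp
    have cm: "Comp C f g \<in> Mor C" "Cod C (Comp C f g) = Over X ax" using c(3)[OF g(1) f(1) g'] f by auto
    show "(glac X Y z g, glac X Y z' g) \<in> glR C X Y"
      unfolding glR_eq using f e1 e2 cm by (auto simp: glac_def)
  qed
qed

sublocale Q: qpre C "glD X Y" "glov X Y" "glac X Y" "glR C X Y" by (rule qp)

abbreviation "gc z \<equiv> glue_rel C X Y `` {z}"

lemma gc_eq: "gc z = Q.E `` {z}" by (simp add: glue_rel_qE)

lemma inlD: "x \<in> Elts X \<Longrightarrow> Inl x \<in> glD X Y" and inrD: "y \<in> Elts Y \<Longrightarrow> Inr y \<in> glD X Y"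
  by (auto simp: glD_def)

lemma gl_autom: "is_autom C (glue C X Y)"
  unfolding glue_qA by (rule Q.qA_autom) (use autD(5)[OF X] autD(6)[OF Y] in \<open>auto simp: gc_eq intro!: Q.cls_quot inlD inrD\<close>)

lemma inl_pm: "pm C X (glue C X Y) (\<lambda>x. gc (Inl x))"
  unfolding pm_def
proof (intro conjI ballI impI)
  fix x assume x: "x \<in> Elts X"
  show "gc (Inl x) \<in> Elts (glue C X Y)" unfolding glue_qA Q.Elts_qA gc_eq using Q.cls_quot[OF inlD[OF x]] .
  show "Over (glue C X Y) (gc (Inl x)) = Over X x" unfolding glue_qA gc_eq using Q.Over_cls[OF inlD[OF x]] by (simp add: glov_def)
  fix f assume f: "f \<in> Mor C" "Cod C f = Over X x"
  then show "gc (Inl (Act X x f)) = Act (glue C X Y) (gc (Inl x)) f"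
    unfolding glue_qA gc_eq using Q.Act_cls[OF inlD[OF x] f(1)] by (simp add: glov_def glac_def)
qed

lemma inr_pm: "pm C Y (glue C X Y) (\<lambda>y. gc (Inr y))"
  unfolding pm_def
proof (intro conjI ballI impI)
  fix x assume x: "x \<in> Elts Y"
  show "gc (Inr x) \<in> Elts (glue C X Y)" unfolding glue_qA Q.Elts_qA gc_eq using Q.cls_quot[OF inrD[OF x]] .
  show "Over (glue C X Y) (gc (Inr x)) = Over Y x" unfolding glue_qA gc_eq using Q.Over_cls[OF inrD[OF x]] by (simp add: glov_def)
  fix f assume f: "f \<in> Mor C" "Cod C f = Over Y x"
  then show "gc (Inr (Act Y x f)) = Act (glue C X Y) (gc (Inr x)) f"
    unfolding glue_qA gc_eq using Q.Act_cls[OF inrD[OF x] f(1)] by (simp add: glov_def glac_def)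
qed

lemma gl_join: "gc (Inl ax) = gc (Inr sy)"
  unfolding gc_eq
proof (rule Q.cls_eq[symmetric])
  have i: "Idm C (Over X ax) \<in> Mor C" "Cod C (Idm C (Over X ax)) = Over X ax"
    using catD(2)[OF cat] autD(1)[OF X axE] by auto
  have "(Inl (Act X ax (Idm C (Over X ax))), Inr (Act Y sy (Idm C (Over X ax)))) \<in> glR C X Y"
    unfolding glR_eq using i by blast
  then have "(Inl ax, Inr sy) \<in> glR C X Y" using autD(3)[OF X axE] autD(3)[OF Y syE] j by simp
  then show "Inr sy \<in> Q.E `` {Inl ax}" using inlD[OF axE] inrD[OF syE] unfolding qE_def by auto
qed

lemma gl_start_acc: "Start X = {sx} \<Longrightarrow> Start (glue C X Y) = {gc (Inl sx)}"
  "Acc Y = {ay} \<Longrightarrow> Acc (glue C X Y) = {gc (Inr ay)}"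
  unfolding glue_qA qA_def by simp_all

lemma gl_univ:
  assumes a: "pm C X W a" and b: "pm C Y W b" and ab: "a ax = b sy"
  shows "\<exists>u. pm C (glue C X Y) W u \<and> (\<forall>x\<in>Elts X. u (gc (Inl x)) = a x) \<and> (\<forall>y\<in>Elts Y. u (gc (Inr y)) = b y)"
proof -
  define v where "v = case_sum a b"
  have v1: "v z \<in> Elts W \<and> Over W (v z) = glov X Y z" if "z \<in> glD X Y" for z
    using that pmD(1,2)[OF a] pmD(1,2)[OF b] by (auto simp: v_def glD_def glov_def)
  have v2: "v (glac X Y z f) = Act W (v z) f" if "z \<in> glD X Y" "f \<in> Mor C" "Cod C f = glov X Y z" for z f
    using that pmD(3)[OF a] pmD(3)[OF b] by (auto simp: v_def glD_def glov_def glac_def)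
  have v3: "v z = v z'" if "(z,z') \<in> glR C X Y" for z z'
  proof -
    from that obtain f where f: "f \<in> Mor C" "Cod C f = Over X ax" "z = Inl (Act X ax f)" "z' = Inr (Act Y sy f)"
      unfolding glR_eq by blast
    show ?thesis using f pmD(3)[OF a axE f(1)] pmD(3)[OF b syE f(1)] ab j by (simp add: v_def)
  qed
  have U1: "pm C (glue C X Y) W (\<lambda>c. v (SOME z. z\<in>c))"
    unfolding glue_qA by (rule Q.qA_univ(1)[where v=v], fact v1, fact v2, fact v3)
  have U2: "v (SOME z'. z' \<in> Q.E``{z}) = v z" if "z \<in> glD X Y" for z
    using Q.qA_ev[of v, OF _ that] v3 by blast
  show ?thesis
  proof (rule exI[of _ "\<lambda>c. v (SOME z. z\<in>c)"], intro conjI ballI)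
    show "pm C (glue C X Y) W (\<lambda>c. v (SOME z. z\<in>c))" by (rule U1)
    fix x assume "x \<in> Elts X" then show "v (SOME z. z \<in> gc (Inl x)) = a x"
      unfolding gc_eq using U2[OF inlD] by (simp add: v_def)
  next
    fix x assume "x \<in> Elts Y" then show "v (SOME z. z \<in> gc (Inr x)) = b x"
      unfolding gc_eq using U2[OF inrD] by (simp add: v_def)
  qed
qed

end


definition pstep :: "('o,'m,'x) dcat_scheme \<Rightarrow> lgen \<Rightarrow> 'm \<Rightarrow> 'o \<Rightarrow> 'o \<Rightarrow> bool" where
  "pstep C l m a b \<longleftrightarrow>
        (l = S \<longrightarrow> m \<in> Plus C \<and> Dom C m = a \<and> Cod C m = b)
      \<and> (l = T \<longrightarrow> m \<in> Minus C \<and> Dom C m = b \<and> Cod C m = a)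
      \<and> (l = I \<longrightarrow> m \<in> Plus C \<and> Dom C m = a \<and> Cod C m = b
                    \<and> (\<exists>g. inverse_pair C m g \<and> g \<in> Minus C))"

lemma is_path_iff: "is_path C (w,ob,mo) \<longleftrightarrow> (\<forall>i\<le>length w. ob i \<in> Ob C) \<and> (\<forall>k<length w. pstep C (w!k) (mo k) (ob k) (ob (Suc k)))"
  unfolding is_path_def pstep_def by simp

definition fstep :: "('o,'m,'e) autom \<Rightarrow> lgen \<Rightarrow> 'm \<Rightarrow> 'e \<Rightarrow> 'e \<Rightarrow> bool" where
  "fstep W l m xa xb \<longleftrightarrow> (l \<noteq> T \<longrightarrow> Act W xb m = xa) \<and> (l = T \<longrightarrow> Act W xa m = xb)"

lemma fam_ok_iff: "fam_ok C w ob mo W x \<longleftrightarrow> (\<forall>i\<le>length w. x i \<in> Elts W \<and> Over W (x i) = ob i)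
    \<and> (\<forall>k<length w. fstep W (w!k) (mo k) (x k) (x (Suc k)))"
  unfolding fam_ok_def fstep_def by simp

definition cob :: "lgen list \<Rightarrow> (nat \<Rightarrow> 'o) \<Rightarrow> (nat \<Rightarrow> 'o) \<Rightarrow> nat \<Rightarrow> 'o" where
  "cob w1 ob1 ob2 = (\<lambda>i. if i \<le> length w1 then ob1 i else ob2 (i - length w1))"
definition cmo :: "lgen list \<Rightarrow> (nat \<Rightarrow> 'm) \<Rightarrow> (nat \<Rightarrow> 'm) \<Rightarrow> nat \<Rightarrow> 'm" where
  "cmo w1 mo1 mo2 = (\<lambda>k. if k < length w1 then mo1 k else mo2 (k - length w1))"

lemma cat_idx1: "k < length u \<Longrightarrow> (u@v)!k = u!k \<and> cmo u ma mb k = ma k \<and> cob u oa obb k = oa k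
   \<and> cob u oa obb (Suc k) = oa (Suc k)"
  by (simp add: cob_def cmo_def nth_append)

lemma cat_idx2: "oa (length u) = obb 0 \<Longrightarrow> (u@v)!(k + length u) = v!k \<and> cmo u ma mb (k + length u) = mb k
   \<and> cob u oa obb (k + length u) = obb k \<and> cob u oa obb (Suc (k + length u)) = obb (Suc k)"
  by (cases k) (auto simp: cob_def cmo_def nth_append)

lemma split_idx: "k < length w1 + length w2 \<Longrightarrow> (k < length w1 \<Longrightarrow> P k) \<Longrightarrow> (\<And>j. k = j + length w1 \<Longrightarrow> j < length w2 \<Longrightarrow> P k) \<Longrightarrow> P k"
  by (metis add.commute le_add_diff_inverse2 linorder_not_le nat_add_left_cancel_less)

lemma split_idx_le: "i \<le> length w1 + length w2 \<Longrightarrow> (i \<le> length w1 \<Longrightarrow> P i) \<Longrightarrow> (\<And>j. i = j + length w1 \<Longrightarrow> j \<le> length w2 \<Longrightarrow> P i) \<Longrightarrow> P i"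
  by (metis add.commute add_le_cancel_left le_add_diff_inverse2 nat_le_linear)

lemma path_cat:
  assumes p1: "is_path C (w1,ob1,mo1)" and p2: "is_path C (w2,ob2,mo2)" and j: "ob1 (length w1) = ob2 0"
  shows "is_path C (w1@w2, cob w1 ob1 ob2, cmo w1 mo1 mo2)"
  unfolding is_path_iff
proof (intro conjI allI impI)
  fix i assume "i \<le> length (w1@w2)"
  then have i: "i \<le> length w1 + length w2" by simp
  show "cob w1 ob1 ob2 i \<in> Ob C"
  proof (rule split_idx_le[OF i])
    assume "i \<le> length w1" then show ?thesis using p1 unfolding is_path_iff cob_def by simp
  next
    fix j assume "i = j + length w1" "j \<le> length w2"
    then show ?thesis using p2 j cat_idx2[where oa=ob1 and u=w1 and obb=ob2 and k=j and v=w2 and ma=mo1 and mb=mo2] unfolding is_path_iff by auto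
  qed
next
  fix k assume "k < length (w1@w2)"
  then have k: "k < length w1 + length w2" by simp
  show "pstep C ((w1@w2)!k) (cmo w1 mo1 mo2 k) (cob w1 ob1 ob2 k) (cob w1 ob1 ob2 (Suc k))"
  proof (rule split_idx[OF k])
    assume "k < length w1" then show ?thesis using p1 cat_idx1[of k w1 w2 mo1 mo2 ob1 ob2] unfolding is_path_iff by simp
  next
    fix i assume "k = i + length w1" "i < length w2"
    then show ?thesis using p2 j cat_idx2[where oa=ob1 and u=w1 and obb=ob2 and k=i and v=w2 and ma=mo1 and mb=mo2] unfolding is_path_iff by simp
  qed
qed

lemma fam_cat:
  assumes f1: "fam_ok C w1 ob1 mo1 W x1" and f2: "fam_ok C w2 ob2 mo2 W x2" and xj: "x1 (length w1) = x2 0"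
    and j: "ob1 (length w1) = ob2 0"
  shows "fam_ok C (w1@w2) (cob w1 ob1 ob2) (cmo w1 mo1 mo2) W (\<lambda>i. if i \<le> length w1 then x1 i else x2 (i - length w1))"
proof -
  let ?x = "\<lambda>i. if i \<le> length w1 then x1 i else x2 (i - length w1)"
  have A: "?x i \<in> Elts W \<and> Over W (?x i) = cob w1 ob1 ob2 i" if i: "i \<le> length w1 + length w2" for i
  proof (rule split_idx_le[OF i])
    assume "i \<le> length w1" then show ?thesis using f1 unfolding fam_ok_iff cob_def by simp
  next
    fix j' assume a: "i = j' + length w1" "j' \<le> length w2"
    show ?thesis
    proof (cases "j' = 0")
      case True then show ?thesis using a f1 unfolding fam_ok_iff cob_def by simp
    next
      case False then show ?thesis using a f2 unfolding fam_ok_iff cob_def by simp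
    qed
  qed
  have B: "fstep W ((w1@w2)!k) (cmo w1 mo1 mo2 k) (?x k) (?x (Suc k))" if k: "k < length w1 + length w2" for k
  proof (rule split_idx[OF k])
    assume "k < length w1" then show ?thesis using f1 cat_idx1[of k w1 w2 mo1 mo2 ob1 ob2] unfolding fam_ok_iff by simp
  next
    fix i assume a: "k = i + length w1" "i < length w2"
    have "?x k = x2 i" using a xj by (cases i) auto
    moreover have "?x (Suc k) = x2 (Suc i)" using a by simp
    ultimately show ?thesis using a f2 j cat_idx2[where oa=ob1 and u=w1 and obb=ob2 and k=i and v=w2 and ma=mo1 and mb=mo2] unfolding fam_ok_iff by simp
  qed
  show ?thesis unfolding fam_ok_iff using A B by simp
qed

lemma fam_sub1:
  assumes f: "fam_ok C (w1@w2) (cob w1 ob1 ob2) (cmo w1 mo1 mo2) W x"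
  shows "fam_ok C w1 ob1 mo1 W x"
proof -
  have A: "x i \<in> Elts W \<and> Over W (x i) = ob1 i" if "i \<le> length w1" for i
    using that f unfolding fam_ok_iff cob_def by auto
  have B: "fstep W (w1!k) (mo1 k) (x k) (x (Suc k))" if k: "k < length w1" for k
  proof -
    have "k < length (w1@w2)" using k by simp
    then have "fstep W ((w1@w2)!k) (cmo w1 mo1 mo2 k) (x k) (x (Suc k))" using f unfolding fam_ok_iff by blast
    then show ?thesis using cat_idx1[of k w1 w2 mo1 mo2 ob1 ob2] k by simp
  qed
  show ?thesis unfolding fam_ok_iff using A B by simp
qed

lemma fam_sub2:
  assumes f: "fam_ok C (w1@w2) (cob w1 ob1 ob2) (cmo w1 mo1 mo2) W x" and j: "ob1 (length w1) = ob2 0"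
  shows "fam_ok C w2 ob2 mo2 W (\<lambda>i. x (i + length w1))"
proof -
  have A: "x (i + length w1) \<in> Elts W \<and> Over W (x (i + length w1)) = ob2 i" if "i \<le> length w2" for i
    using that f j cat_idx2[where oa=ob1 and u=w1 and obb=ob2 and k=i and v=w2 and ma=mo1 and mb=mo2] unfolding fam_ok_iff by auto
  have B: "fstep W (w2!k) (mo2 k) (x (k + length w1)) (x (Suc k + length w1))" if k: "k < length w2" for k
  proof -
    have "k + length w1 < length (w1@w2)" using k by simp
    then have "fstep W ((w1@w2)!(k + length w1)) (cmo w1 mo1 mo2 (k + length w1)) (x (k + length w1)) (x (Suc (k + length w1)))"
      using f unfolding fam_ok_iff by blast
    then show ?thesis
      using j cat_idx2[where oa=ob1 and u=w1 and obb=ob2 and k=k and v=w2 and ma=mo1 and mb=mo2] by simp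
  qed
  show ?thesis unfolding fam_ok_iff using A B by simp
qed

lemma fam_pm:
  assumes dc: "is_dcat C" and p: "is_path C (w,ob,mo)" and h: "pm C W W' h" and f: "fam_ok C w ob mo W x"
  shows "fam_ok C w ob mo W' (\<lambda>i. h (x i))"
  unfolding fam_ok_def
proof (intro conjI allI impI)
  note pd = pathD[OF dc p]
  have fx: "\<And>i. i \<le> length w \<Longrightarrow> x i \<in> Elts W \<and> Over W (x i) = ob i" using f unfolding fam_ok_def by blast
  have fS: "\<And>k. k < length w \<Longrightarrow> w!k \<noteq> T \<Longrightarrow> Act W (x (Suc k)) (mo k) = x k" using f unfolding fam_ok_def by blast
  have fT: "\<And>k. k < length w \<Longrightarrow> w!k = T \<Longrightarrow> Act W (x k) (mo k) = x (Suc k)" using f unfolding fam_ok_def by blast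
  fix i assume "i \<le> length w" then show "h (x i) \<in> Elts W'" "Over W' (h (x i)) = ob i"
    using fx pmD(1,2)[OF h] by auto
next
  note pd = pathD[OF dc p]
  have fx: "\<And>i. i \<le> length w \<Longrightarrow> x i \<in> Elts W \<and> Over W (x i) = ob i" using f unfolding fam_ok_def by blast
  have fS: "\<And>k. k < length w \<Longrightarrow> w!k \<noteq> T \<Longrightarrow> Act W (x (Suc k)) (mo k) = x k" using f unfolding fam_ok_def by blast
  have fT: "\<And>k. k < length w \<Longrightarrow> w!k = T \<Longrightarrow> Act W (x k) (mo k) = x (Suc k)" using f unfolding fam_ok_def by blast
  {
  fix k assume k: "k < length w" "w!k \<noteq> T"
  show "Act W' (h (x (Suc k))) (mo k) = h (x k)"
    using pmD(3)[OF h, of "x (Suc k)" "mo k"] fx[of "Suc k"] pd(2,3)[of k] k fS by simp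
  }
  {
  fix k assume k: "k < length w" "w!k = T"
  show "Act W' (h (x k)) (mo k) = h (x (Suc k))"
    using pmD(3)[OF h, of "x k" "mo k"] fx[of "k"] pd(2,4)[of k] k fT by simp
  }
qed


lemma gl_amor:
  assumes g: "gok C X Y ax sy" and sx: "Start X = {sx}" and ay: "Acc Y = {ay}"
    and a: "pm C X W a" and b: "pm C Y W b" and ab: "a ax = b sy" and as: "a sx \<in> Start W" and ba: "b ay \<in> Acc W"
  shows "\<exists>u. amor C (glue C X Y) W u \<and> (\<forall>x\<in>Elts X. u (glue_rel C X Y `` {Inl x}) = a x)
      \<and> (\<forall>y\<in>Elts Y. u (glue_rel C X Y `` {Inr y}) = b y)"
proof -
  interpret g: gok C X Y ax sy by (rule g)
  obtain u where u: "pm C (glue C X Y) W u" "\<forall>x\<in>Elts X. u (glue_rel C X Y `` {Inl x}) = a x"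
      "\<forall>y\<in>Elts Y. u (glue_rel C X Y `` {Inr y}) = b y"
    using g.gl_univ[OF a b ab] by blast
  have sxE: "sx \<in> Elts X" using sx autD(5)[OF g.X] by auto
  have ayE: "ay \<in> Elts Y" using ay autD(6)[OF g.Y] by auto
  have "amor C (glue C X Y) W u" unfolding amor_pm
    using u sxE ayE as ba g.gl_start_acc(1)[OF sx] g.gl_start_acc(2)[OF ay] by simp
  then show ?thesis using u by blast
qed

lemma tr_amor:
  assumes dc: "is_dcat C" and p: "is_path C (w,ob,mo)" and W: "is_autom C W" and f: "fam_ok C w ob mo W x"
    and s: "x 0 \<in> Start W" and a: "x (length w) \<in> Acc W"
  shows "\<exists>u. amor C (track C (w,ob,mo)) W u \<and> (\<forall>i\<le>length w. u (tc C (w,ob,mo) i) = x i)"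
proof -
  obtain u where u: "pm C (track C (w,ob,mo)) W u" "\<forall>i\<le>length w. u (tc C (w,ob,mo) i) = x i"
    using tr_univ[OF dc p W f] by blast
  have "amor C (track C (w,ob,mo)) W u" unfolding amor_pm tr_start_acc using u s a by simp
  then show ?thesis using u by blast
qed

lemma track_autom: "is_track C X \<Longrightarrow> is_autom C X" unfolding is_track_def by simp

lemma gokI: "is_category C \<Longrightarrow> is_autom C X \<Longrightarrow> is_autom C Y \<Longrightarrow> Acc X = {ax} \<Longrightarrow> Start Y = {sy}
  \<Longrightarrow> tgt X = src Y \<Longrightarrow> gok C X Y ax sy"
  unfolding gok_def tgt_def src_def by simp

lemma pm_comp': "pm C X Y h \<Longrightarrow> pm C Y Z k \<Longrightarrow> pm C X Z (\<lambda>x. k (h x))"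
  using pm_comp[of C X Y h Z k] by (simp add: comp_def)

lemma amor_acc: "amor C X Y h \<Longrightarrow> Acc X = {a} \<Longrightarrow> Acc Y = {b} \<Longrightarrow> h a = b"
  unfolding amor_def by auto
lemma amor_start: "amor C X Y h \<Longrightarrow> Start X = {a} \<Longrightarrow> Start Y = {b} \<Longrightarrow> h a = b"
  unfolding amor_def by auto

lemma assoc1:
  assumes dc: "is_dcat C" and tL: "\<forall>G\<in>L. is_track C G" and tM: "\<forall>G\<in>M. is_track C G" and tN: "\<forall>G\<in>N. is_track C G"
  shows "ltimes C (ltimes C L M) N \<subseteq> ltimes C L (ltimes C M N)"
proof
  fix Z assume "Z \<in> ltimes C (ltimes C L M) N"
  then obtain X D hz where Z: "is_track C Z" and X: "X \<in> ltimes C L M" and D: "D \<in> N" and XD: "tgt X = src D"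
      and hz: "amor C Z (glue C X D) hz"
    unfolding ltimes_def down_def aleq_def by blast
  from X obtain G D' hx where tX: "is_track C X" and G: "G \<in> L" and D': "D' \<in> M" and GD': "tgt G = src D'"
      and hx: "amor C X (glue C G D') hx"
    unfolding ltimes_def down_def aleq_def by blast
  have cat: "is_category C" using dc dcat_cat by blast
  have tG: "is_track C G" using G tL by blast
  have tD': "is_track C D'" using D' tM by blast
  have tD: "is_track C D" using D tN by blast
  obtain sG aG where sG: "Start G = {sG}" and aG: "Acc G = {aG}" using track_of[OF dc tG] by metis
  obtain sX aX where sX: "Start X = {sX}" and aX: "Acc X = {aX}" using track_of[OF dc tX] by metis
  obtain w1 ob1 mo1 h1 k1 sD' aD' where P1: "is_path C (w1,ob1,mo1)" and isaD': "is_autom C D'"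
    and h1: "pm C D' (track C (w1,ob1,mo1)) h1" and sD': "Start D' = {sD'}" and aD': "Acc D' = {aD'}"
    and h1s: "h1 sD' = tc C (w1,ob1,mo1) 0" and h1a: "h1 aD' = tc C (w1,ob1,mo1) (length w1)"
    and srcD': "src D' = ob1 0" and tgtD': "tgt D' = ob1 (length w1)"
    and k1: "pm C (track C (w1,ob1,mo1)) D' k1" and k1s: "k1 (tc C (w1,ob1,mo1) 0) = sD'"
    and k1a: "k1 (tc C (w1,ob1,mo1) (length w1)) = aD'"
    by (rule track_of[OF dc tD'])
  obtain w2 ob2 mo2 h2 k2 sD aD where P2: "is_path C (w2,ob2,mo2)" and isaD: "is_autom C D"
    and h2: "pm C D (track C (w2,ob2,mo2)) h2" and sD: "Start D = {sD}" and aD: "Acc D = {aD}"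
    and h2s: "h2 sD = tc C (w2,ob2,mo2) 0" and h2a: "h2 aD = tc C (w2,ob2,mo2) (length w2)"
    and srcD: "src D = ob2 0" and tgtD: "tgt D = ob2 (length w2)"
    and k2: "pm C (track C (w2,ob2,mo2)) D k2" and k2s: "k2 (tc C (w2,ob2,mo2) 0) = sD"
    and k2a: "k2 (tc C (w2,ob2,mo2) (length w2)) = aD"
    by (rule track_of[OF dc tD])
  have aD'E: "aD' \<in> Elts D'" and sD'E: "sD' \<in> Elts D'" using aD' sD' autD(5,6)[OF isaD'] by auto
  have aDE: "aD \<in> Elts D" and sDE: "sD \<in> Elts D" using aD sD autD(5,6)[OF isaD] by auto
  have aXE: "aX \<in> Elts X" and sXE: "sX \<in> Elts X" using aX sX autD(5,6)[OF track_autom[OF tX]] by auto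
  have gGD': "gok C G D' aG sD'" by (rule gokI[OF cat track_autom[OF tG] isaD' aG sD' GD'])
  interpret gGD': gok C G D' aG sD' by (rule gGD')
  have hxa: "hx aX = glue_rel C G D' `` {Inr aD'}" using amor_acc[OF hx aX gGD'.gl_start_acc(2)[OF aD']] .
  have hxs: "hx sX = glue_rel C G D' `` {Inl sG}" using amor_start[OF hx sX gGD'.gl_start_acc(1)[OF sG]] .
  have tgtX: "tgt X = tgt D'"
  proof -
    have "tgt X = Over X aX" unfolding tgt_def aX by simp
    also have "\<dots> = Over (glue C G D') (hx aX)" using pmD(2)[OF _ aXE] hx amor_pm by metis
    also have "\<dots> = Over D' aD'" using hxa pmD(2)[OF gGD'.inr_pm aD'E] by simp
    finally show ?thesis unfolding tgt_def aD' by simp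
  qed
  have jn: "ob1 (length w1) = ob2 0" using tgtX XD tgtD' srcD by simp
  let ?q = "(w1@w2, cob w1 ob1 ob2, cmo w1 mo1 mo2)"
  let ?Y = "track C ?q"
  have P: "is_path C ?q" by (rule path_cat[OF P1 P2 jn])
  have tY: "is_track C ?Y" by (rule tr_is_track[OF dc P])
  have autY: "is_autom C ?Y" by (rule tr_autom[OF dc P])
  have compq: "fam_ok C (w1@w2) (cob w1 ob1 ob2) (cmo w1 mo1 mo2) ?Y (tc C ?q)" by (rule tr_compat[OF dc P])
  have D'D: "tgt D' = src D" using tgtX XD by simp
  have gD'D: "gok C D' D aD' sD" by (rule gokI[OF cat isaD' isaD aD' sD D'D])
  interpret gD'D: gok C D' D aD' sD by (rule gD'D)
  have YD'D: "aleq C ?Y (glue C D' D)"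
  proof -
    have pa: "pm C (track C (w1,ob1,mo1)) (glue C D' D) (\<lambda>y. glue_rel C D' D `` {Inl (k1 y)})"
      using pm_comp'[OF k1 gD'D.inl_pm] .
    have pb: "pm C (track C (w2,ob2,mo2)) (glue C D' D) (\<lambda>y. glue_rel C D' D `` {Inr (k2 y)})"
      using pm_comp'[OF k2 gD'D.inr_pm] .
    have f1: "fam_ok C w1 ob1 mo1 (glue C D' D) (\<lambda>i. glue_rel C D' D `` {Inl (k1 (tc C (w1,ob1,mo1) i))})"
      using fam_pm[OF dc P1 pa tr_compat[OF dc P1]] .
    have f2: "fam_ok C w2 ob2 mo2 (glue C D' D) (\<lambda>i. glue_rel C D' D `` {Inr (k2 (tc C (w2,ob2,mo2) i))})"
      using fam_pm[OF dc P2 pb tr_compat[OF dc P2]] .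
    have xj: "glue_rel C D' D `` {Inl (k1 (tc C (w1,ob1,mo1) (length w1)))} = glue_rel C D' D `` {Inr (k2 (tc C (w2,ob2,mo2) 0))}"
      using k1a k2s gD'D.gl_join by simp
    note fc = fam_cat[OF f1 f2 xj jn]
    have s0: "(if 0 \<le> length w1 then glue_rel C D' D `` {Inl (k1 (tc C (w1,ob1,mo1) 0))}
              else glue_rel C D' D `` {Inr (k2 (tc C (w2,ob2,mo2) (0 - length w1)))}) \<in> Start (glue C D' D)"
      using k1s gD'D.gl_start_acc(1)[OF sD'] by simp
    have aa: "(if length (w1@w2) \<le> length w1 then glue_rel C D' D `` {Inl (k1 (tc C (w1,ob1,mo1) (length (w1@w2))))}
              else glue_rel C D' D `` {Inr (k2 (tc C (w2,ob2,mo2) (length (w1@w2) - length w1)))}) \<in> Acc (glue C D' D)"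
    proof (cases "w2 = []")
      case True then show ?thesis using xj k2a k2s gD'D.gl_start_acc(2)[OF aD] by simp
    next
      case False then show ?thesis using k2a gD'D.gl_start_acc(2)[OF aD] by simp
    qed
    obtain u where "amor C ?Y (glue C D' D) u"
      using tr_amor[OF dc P gD'D.gl_autom fc s0 aa] by blast
    then show ?thesis unfolding aleq_def by blast
  qed
  have YMN: "?Y \<in> ltimes C M N"
    unfolding ltimes_def down_def using tY YD'D D' D D'D by blast
  have GY: "tgt G = src ?Y" using GD' srcD' tr_src_tgt(1)[OF dc P] by (simp add: cob_def)
  have gGY: "gok C G ?Y aG (tc C ?q 0)"
    by (rule gokI[OF cat track_autom[OF tG] autY aG _ GY]) (simp add: tr_start_acc)
  interpret gGY: gok C G ?Y aG "tc C ?q 0" by (rule gGY)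
  obtain s1 where s1: "pm C (track C (w1,ob1,mo1)) ?Y s1" "\<forall>i\<le>length w1. s1 (tc C (w1,ob1,mo1) i) = tc C ?q i"
    using tr_univ[OF dc P1 autY fam_sub1[OF compq]] by blast
  obtain s2 where s2: "pm C (track C (w2,ob2,mo2)) ?Y s2" "\<forall>i\<le>length w2. s2 (tc C (w2,ob2,mo2) i) = tc C ?q (i + length w1)"
    using tr_univ[OF dc P2 autY fam_sub2[OF compq jn]] by blast
  have pb1: "pm C D' (glue C G ?Y) (\<lambda>y. glue_rel C G ?Y `` {Inr (s1 (h1 y))})"
    using pm_comp'[OF pm_comp'[OF h1 s1(1)] gGY.inr_pm] .
  have pb2: "pm C D (glue C G ?Y) (\<lambda>y. glue_rel C G ?Y `` {Inr (s2 (h2 y))})"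
    using pm_comp'[OF pm_comp'[OF h2 s2(1)] gGY.inr_pm] .
  have c1: "glue_rel C G ?Y `` {Inl aG} = glue_rel C G ?Y `` {Inr (s1 (h1 sD'))}"
    using gGY.gl_join h1s s1(2) by simp
  obtain phi where phi: "pm C (glue C G D') (glue C G ?Y) phi"
    "\<forall>x\<in>Elts G. phi (glue_rel C G D' `` {Inl x}) = glue_rel C G ?Y `` {Inl x}"
    "\<forall>y\<in>Elts D'. phi (glue_rel C G D' `` {Inr y}) = glue_rel C G ?Y `` {Inr (s1 (h1 y))}"
    using gGD'.gl_univ[OF gGY.inl_pm pb1 c1] by blast
  have gXD: "gok C X D aX sD" by (rule gokI[OF cat track_autom[OF tX] isaD aX sD XD])
  have pa2: "pm C X (glue C G ?Y) (\<lambda>x. phi (hx x))"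
    using pm_comp'[OF _ phi(1)] hx amor_pm by blast
  have c2: "phi (hx aX) = glue_rel C G ?Y `` {Inr (s2 (h2 sD))}"
    using hxa phi(3) aD'E h1a s1(2) h2s s2(2) by simp
  have st: "phi (hx sX) \<in> Start (glue C G ?Y)"
    using hxs phi(2) gGY.gl_start_acc(1)[OF sG] sG autD(5)[OF track_autom[OF tG]] by auto
  have ac: "glue_rel C G ?Y `` {Inr (s2 (h2 aD))} \<in> Acc (glue C G ?Y)"
    using h2a s2(2) gGY.gl_start_acc(2)[of "tc C ?q (length (w1@w2))"] tr_start_acc(2)[of C "w1@w2"] by (simp add: add.commute)
  obtain u where u: "amor C (glue C X D) (glue C G ?Y) u"
    using gl_amor[OF gXD sX aD pa2 pb2 c2 st ac] by blast
  have "amor C Z (glue C G ?Y) (u \<circ> hz)" by (rule amor_comp[OF hz u])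
  moreover have "glue C G ?Y \<in> {glue C G D | G D. G \<in> L \<and> D \<in> ltimes C M N \<and> tgt G = src D}"
    using G YMN GY by blast
  ultimately show "Z \<in> ltimes C L (ltimes C M N)"
    unfolding ltimes_def[of C L "ltimes C M N"] down_def aleq_def using Z by blast
qed

lemma assoc2:
  assumes dc: "is_dcat C" and tL: "\<forall>G\<in>L. is_track C G" and tM: "\<forall>G\<in>M. is_track C G" and tN: "\<forall>G\<in>N. is_track C G"
  shows "ltimes C L (ltimes C M N) \<subseteq> ltimes C (ltimes C L M) N"
proof
  fix Z assume "Z \<in> ltimes C L (ltimes C M N)"
  then obtain G X hz where Z: "is_track C Z" and G: "G \<in> L" and X: "X \<in> ltimes C M N" and GX: "tgt G = src X"
      and hz: "amor C Z (glue C G X) hz"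
    unfolding ltimes_def[of C L] down_def aleq_def by blast
  from X obtain D' D hx where tX: "is_track C X" and D': "D' \<in> M" and D: "D \<in> N" and D'D: "tgt D' = src D"
      and hx: "amor C X (glue C D' D) hx"
    unfolding ltimes_def down_def aleq_def by blast
  have cat: "is_category C" using dc dcat_cat by blast
  have tG: "is_track C G" using G tL by blast
  have tD': "is_track C D'" using D' tM by blast
  have tD: "is_track C D" using D tN by blast
  obtain sD aD where sD: "Start D = {sD}" and aD: "Acc D = {aD}" using track_of[OF dc tD] by metis
  obtain sX aX where sX: "Start X = {sX}" and aX: "Acc X = {aX}" using track_of[OF dc tX] by metis
  obtain w1 ob1 mo1 h1 k1 sG aG where P1: "is_path C (w1,ob1,mo1)" and isaG: "is_autom C G"
    and h1: "pm C G (track C (w1,ob1,mo1)) h1" and sG: "Start G = {sG}" and aG: "Acc G = {aG}"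
    and h1s: "h1 sG = tc C (w1,ob1,mo1) 0" and h1a: "h1 aG = tc C (w1,ob1,mo1) (length w1)"
    and srcG: "src G = ob1 0" and tgtG: "tgt G = ob1 (length w1)"
    and k1: "pm C (track C (w1,ob1,mo1)) G k1" and k1s: "k1 (tc C (w1,ob1,mo1) 0) = sG"
    and k1a: "k1 (tc C (w1,ob1,mo1) (length w1)) = aG"
    by (rule track_of[OF dc tG])
  obtain w2 ob2 mo2 h2 k2 sD' aD' where P2: "is_path C (w2,ob2,mo2)" and isaD': "is_autom C D'"
    and h2: "pm C D' (track C (w2,ob2,mo2)) h2" and sD': "Start D' = {sD'}" and aD': "Acc D' = {aD'}"
    and h2s: "h2 sD' = tc C (w2,ob2,mo2) 0" and h2a: "h2 aD' = tc C (w2,ob2,mo2) (length w2)"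
    and srcD': "src D' = ob2 0" and tgtD': "tgt D' = ob2 (length w2)"
    and k2: "pm C (track C (w2,ob2,mo2)) D' k2" and k2s: "k2 (tc C (w2,ob2,mo2) 0) = sD'"
    and k2a: "k2 (tc C (w2,ob2,mo2) (length w2)) = aD'"
    by (rule track_of[OF dc tD'])
  have aD'E: "aD' \<in> Elts D'" and sD'E: "sD' \<in> Elts D'" using aD' sD' autD(5,6)[OF isaD'] by auto
  have aDE: "aD \<in> Elts D" and sDE: "sD \<in> Elts D" using aD sD autD(5,6)[OF track_autom[OF tD]] by auto
  have aXE: "aX \<in> Elts X" and sXE: "sX \<in> Elts X" using aX sX autD(5,6)[OF track_autom[OF tX]] by auto
  have aGE: "aG \<in> Elts G" and sGE: "sG \<in> Elts G" using aG sG autD(5,6)[OF isaG] by auto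
  have gD'D: "gok C D' D aD' sD" by (rule gokI[OF cat isaD' track_autom[OF tD] aD' sD D'D])
  interpret gD'D: gok C D' D aD' sD by (rule gD'D)
  have hxa: "hx aX = glue_rel C D' D `` {Inr aD}" using amor_acc[OF hx aX gD'D.gl_start_acc(2)[OF aD]] .
  have hxs: "hx sX = glue_rel C D' D `` {Inl sD'}" using amor_start[OF hx sX gD'D.gl_start_acc(1)[OF sD']] .
  have srcX: "src X = src D'"
  proof -
    have "src X = Over X sX" unfolding src_def sX by simp
    also have "\<dots> = Over (glue C D' D) (hx sX)" using pmD(2)[OF _ sXE] hx amor_pm by metis
    also have "\<dots> = Over D' sD'" using hxs pmD(2)[OF gD'D.inl_pm sD'E] by simp
    finally show ?thesis unfolding src_def sD' by simp
  qed
  have jn: "ob1 (length w1) = ob2 0" using srcX GX tgtG srcD' by simp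
  have GD': "tgt G = src D'" using GX srcX by simp
  let ?q = "(w1@w2, cob w1 ob1 ob2, cmo w1 mo1 mo2)"
  let ?Y = "track C ?q"
  have P: "is_path C ?q" by (rule path_cat[OF P1 P2 jn])
  have tY: "is_track C ?Y" by (rule tr_is_track[OF dc P])
  have autY: "is_autom C ?Y" by (rule tr_autom[OF dc P])
  have compq: "fam_ok C (w1@w2) (cob w1 ob1 ob2) (cmo w1 mo1 mo2) ?Y (tc C ?q)" by (rule tr_compat[OF dc P])
  have gGD': "gok C G D' aG sD'" by (rule gokI[OF cat isaG isaD' aG sD' GD'])
  interpret gGD': gok C G D' aG sD' by (rule gGD')
  have YGD': "aleq C ?Y (glue C G D')"
  proof -
    have pa: "pm C (track C (w1,ob1,mo1)) (glue C G D') (\<lambda>y. glue_rel C G D' `` {Inl (k1 y)})"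
      using pm_comp'[OF k1 gGD'.inl_pm] .
    have pb: "pm C (track C (w2,ob2,mo2)) (glue C G D') (\<lambda>y. glue_rel C G D' `` {Inr (k2 y)})"
      using pm_comp'[OF k2 gGD'.inr_pm] .
    have f1: "fam_ok C w1 ob1 mo1 (glue C G D') (\<lambda>i. glue_rel C G D' `` {Inl (k1 (tc C (w1,ob1,mo1) i))})"
      using fam_pm[OF dc P1 pa tr_compat[OF dc P1]] .
    have f2: "fam_ok C w2 ob2 mo2 (glue C G D') (\<lambda>i. glue_rel C G D' `` {Inr (k2 (tc C (w2,ob2,mo2) i))})"
      using fam_pm[OF dc P2 pb tr_compat[OF dc P2]] .
    have xj: "glue_rel C G D' `` {Inl (k1 (tc C (w1,ob1,mo1) (length w1)))} = glue_rel C G D' `` {Inr (k2 (tc C (w2,ob2,mo2) 0))}"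
      using k1a k2s gGD'.gl_join by simp
    note fc = fam_cat[OF f1 f2 xj jn]
    have s0: "(if 0 \<le> length w1 then glue_rel C G D' `` {Inl (k1 (tc C (w1,ob1,mo1) 0))}
              else glue_rel C G D' `` {Inr (k2 (tc C (w2,ob2,mo2) (0 - length w1)))}) \<in> Start (glue C G D')"
      using k1s gGD'.gl_start_acc(1)[OF sG] by simp
    have aa: "(if length (w1@w2) \<le> length w1 then glue_rel C G D' `` {Inl (k1 (tc C (w1,ob1,mo1) (length (w1@w2))))}
              else glue_rel C G D' `` {Inr (k2 (tc C (w2,ob2,mo2) (length (w1@w2) - length w1)))}) \<in> Acc (glue C G D')"
    proof (cases "w2 = []")
      case True then show ?thesis using xj k2a k2s gGD'.gl_start_acc(2)[OF aD'] by simp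
    next
      case False then show ?thesis using k2a gGD'.gl_start_acc(2)[OF aD'] by simp
    qed
    obtain u where "amor C ?Y (glue C G D') u"
      using tr_amor[OF dc P gGD'.gl_autom fc s0 aa] by blast
    then show ?thesis unfolding aleq_def by blast
  qed
  have YLM: "?Y \<in> ltimes C L M"
    unfolding ltimes_def down_def using tY YGD' G D' GD' by blast
  have YD: "tgt ?Y = src D"
  proof -
    have "tgt ?Y = cob w1 ob1 ob2 (length (w1@w2))" using tr_src_tgt(2)[OF dc P] by simp
    also have "\<dots> = ob2 (length w2)" using jn by (cases "w2 = []") (auto simp: cob_def)
    finally show ?thesis using tgtD' D'D by simp
  qed
  have gYD: "gok C ?Y D (tc C ?q (length (w1@w2))) sD"
    by (rule gokI[OF cat autY track_autom[OF tD] _ sD YD]) (simp add: tr_start_acc)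
  interpret gYD: gok C ?Y D "tc C ?q (length (w1@w2))" sD by (rule gYD)
  obtain s1 where s1: "pm C (track C (w1,ob1,mo1)) ?Y s1" "\<forall>i\<le>length w1. s1 (tc C (w1,ob1,mo1) i) = tc C ?q i"
    using tr_univ[OF dc P1 autY fam_sub1[OF compq]] by blast
  obtain s2 where s2: "pm C (track C (w2,ob2,mo2)) ?Y s2" "\<forall>i\<le>length w2. s2 (tc C (w2,ob2,mo2) i) = tc C ?q (i + length w1)"
    using tr_univ[OF dc P2 autY fam_sub2[OF compq jn]] by blast
  have pa1: "pm C D' (glue C ?Y D) (\<lambda>y. glue_rel C ?Y D `` {Inl (s2 (h2 y))})"
    using pm_comp'[OF pm_comp'[OF h2 s2(1)] gYD.inl_pm] .
  have pa2: "pm C G (glue C ?Y D) (\<lambda>y. glue_rel C ?Y D `` {Inl (s1 (h1 y))})"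
    using pm_comp'[OF pm_comp'[OF h1 s1(1)] gYD.inl_pm] .
  have c1: "glue_rel C ?Y D `` {Inl (s2 (h2 aD'))} = glue_rel C ?Y D `` {Inr sD}"
    using gYD.gl_join h2a s2(2) by (simp add: add.commute)
  obtain psi where psi: "pm C (glue C D' D) (glue C ?Y D) psi"
    "\<forall>x\<in>Elts D'. psi (glue_rel C D' D `` {Inl x}) = glue_rel C ?Y D `` {Inl (s2 (h2 x))}"
    "\<forall>y\<in>Elts D. psi (glue_rel C D' D `` {Inr y}) = glue_rel C ?Y D `` {Inr y}"
    using gD'D.gl_univ[OF pa1 gYD.inr_pm c1] by blast
  have gGX: "gok C G X aG sX" by (rule gokI[OF cat isaG track_autom[OF tX] aG sX GX])
  have pb2: "pm C X (glue C ?Y D) (\<lambda>x. psi (hx x))"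
    using pm_comp'[OF _ psi(1)] hx amor_pm by blast
  have c2: "glue_rel C ?Y D `` {Inl (s1 (h1 aG))} = psi (hx sX)"
    using hxs psi(2) sD'E h1a s1(2) h2s s2(2) by simp
  have st: "glue_rel C ?Y D `` {Inl (s1 (h1 sG))} \<in> Start (glue C ?Y D)"
    using h1s s1(2) gYD.gl_start_acc(1)[of "tc C ?q 0"] tr_start_acc(1)[of C "w1@w2"] by simp
  have ac: "psi (hx aX) \<in> Acc (glue C ?Y D)"
    using hxa psi(3) aDE gYD.gl_start_acc(2)[OF aD] by simp
  obtain u where u: "amor C (glue C G X) (glue C ?Y D) u"
    using gl_amor[OF gGX sG aX pa2 pb2 c2 st ac] by blast
  have "amor C Z (glue C ?Y D) (u \<circ> hz)" by (rule amor_comp[OF hz u])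
  moreover have "glue C ?Y D \<in> {glue C G D | G D. G \<in> ltimes C L M \<and> D \<in> N \<and> tgt G = src D}"
    using YLM D YD by blast
  ultimately show "Z \<in> ltimes C (ltimes C L M) N"
    unfolding ltimes_def[of C "ltimes C L M" N] down_def aleq_def using Z by blast
qed


lemma down_lang: "is_lang C (down C A)"
  unfolding is_lang_def down_def using aleq_trans by blast

lemma lang_Un: "is_lang C L \<Longrightarrow> is_lang C M \<Longrightarrow> is_lang C (L \<union> M)"
  unfolding is_lang_def by blast

lemma lang_UN: "(\<And>n. n \<in> A \<Longrightarrow> is_lang C (F n)) \<Longrightarrow> is_lang C (\<Union>n\<in>A. F n)"
  unfolding is_lang_def by blast

lemma lpow_lang: "is_lang C (lpow C L n)"
  by (cases n) (simp_all add: one_lang_def ltimes_def down_lang)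

lemma Rat_lang: "L \<in> Rat C \<Longrightarrow> is_lang C L"
proof (induction rule: Rat.induct)
  case Rat_empty then show ?case unfolding is_lang_def by simp
next
  case (Rat_atom G) show ?case by (rule down_lang)
next
  case (Rat_plus L M) then show ?case unfolding lplus_def using lang_Un by blast
next
  case (Rat_times L M) show ?case unfolding ltimes_def by (rule down_lang)
next
  case (Rat_splus L) then show ?case unfolding lstar_plus_def by (intro lang_UN lpow_lang)
qed

lemma lang_tracks: "is_lang C L \<Longrightarrow> \<forall>G\<in>L. is_track C G" unfolding is_lang_def by blast

lemma ltimes_mono: "L \<subseteq> L' \<Longrightarrow> M \<subseteq> M' \<Longrightarrow> ltimes C L M \<subseteq> ltimes C L' M'"
  unfolding ltimes_def down_def by blast

lemma iota_simps: "Elts (iota C U) = {g \<in> Mor C. Cod C g = U}" "Over (iota C U) = Dom C" "Act (iota C U) = Comp C"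
  "Start (iota C U) = {Idm C U}" "Acc (iota C U) = {Idm C U}"
  unfolding iota_def by simp_all

lemma iota_autom: assumes cat: "is_category C" and U: "U \<in> Ob C" shows "is_autom C (iota C U)"
  unfolding is_autom_def iota_simps using catD[OF cat] U by auto

lemma sub_ltimes_one:
  assumes dc: "is_dcat C" and tL: "\<forall>G\<in>L. is_track C G"
  shows "L \<subseteq> ltimes C L (one_lang C)"
proof
  fix G assume G: "G \<in> L"
  have cat: "is_category C" using dc dcat_cat by blast
  have tG: "is_track C G" using G tL by blast
  have aut: "is_autom C G" using tG track_autom by blast
  obtain sG aG where sG: "Start G = {sG}" and aG: "Acc G = {aG}" using track_of[OF dc tG] by metis
  have aGE: "aG \<in> Elts G" and sGE: "sG \<in> Elts G" using aG sG autD(5,6)[OF aut] by auto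
  define U where "U = tgt G"
  have UOb: "U \<in> Ob C" unfolding U_def tgt_def aG using autD(1)[OF aut aGE] by simp
  let ?q = "([] :: lgen list, \<lambda>_::nat. U, \<lambda>_::nat. undefined :: 'b)"
  have P: "is_path C ?q" unfolding is_path_iff using UOb by simp
  let ?Y = "track C ?q"
  have tY: "is_track C ?Y" by (rule tr_is_track[OF dc P])
  have Y1: "?Y \<in> one_lang C"
  proof -
    have f: "fam_ok C [] (\<lambda>_. U) (\<lambda>_. undefined) (iota C U) (\<lambda>_. Idm C U)"
      unfolding fam_ok_def iota_simps using catD(2)[OF cat UOb] by simp
    obtain u where "amor C ?Y (iota C U) u"
      using tr_amor[OF dc P iota_autom[OF cat UOb] f] by (auto simp: iota_simps)
    then show ?thesis unfolding one_lang_def down_def aleq_def using tY UOb by blast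
  qed
  have GY: "tgt G = src ?Y" using tr_src_tgt(1)[OF dc P] U_def by simp
  have g: "gok C G ?Y aG (tc C ?q 0)"
    by (rule gokI[OF cat aut track_autom[OF tY] aG _ GY]) (simp add: tr_start_acc)
  interpret g: gok C G ?Y aG "tc C ?q 0" by (rule g)
  have "amor C G (glue C G ?Y) (\<lambda>x. glue_rel C G ?Y `` {Inl x})"
    unfolding amor_pm using g.inl_pm g.gl_start_acc(1)[OF sG] g.gl_start_acc(2)[of "tc C ?q 0"] g.gl_join sG aG
    by (simp add: tr_start_acc)
  then have "aleq C G (glue C G ?Y)" unfolding aleq_def by blast
  moreover have "glue C G ?Y \<in> {glue C G D | G D. G \<in> L \<and> D \<in> one_lang C \<and> tgt G = src D}"
    using G Y1 GY by blast
  ultimately show "G \<in> ltimes C L (one_lang C)"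
    unfolding ltimes_def[of C L] down_def using tG by blast
qed

lemma ltimes_one_sub:
  assumes dc: "is_dcat C" and L: "is_lang C L"
  shows "ltimes C L (one_lang C) \<subseteq> L"
proof
  fix Z assume "Z \<in> ltimes C L (one_lang C)"
  then obtain G Y hz where Z: "is_track C Z" and G: "G \<in> L" and Y: "Y \<in> one_lang C" and GY: "tgt G = src Y"
      and hz: "amor C Z (glue C G Y) hz"
    unfolding ltimes_def[of C L] down_def aleq_def by blast
  from Y obtain V hy where tY: "is_track C Y" and V: "V \<in> Ob C" and hy: "amor C Y (iota C V) hy"
    unfolding one_lang_def down_def aleq_def by blast
  have cat: "is_category C" using dc dcat_cat by blast
  have tG: "is_track C G" using G L unfolding is_lang_def by blast
  have aut: "is_autom C G" using tG track_autom by blast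
  have autY: "is_autom C Y" using tY track_autom by blast
  obtain sG aG where sG: "Start G = {sG}" and aG: "Acc G = {aG}" using track_of[OF dc tG] by metis
  obtain sY aY where sY: "Start Y = {sY}" and aY: "Acc Y = {aY}" using track_of[OF dc tY] by metis
  have aGE: "aG \<in> Elts G" and sGE: "sG \<in> Elts G" using aG sG autD(5,6)[OF aut] by auto
  have aYE: "aY \<in> Elts Y" and sYE: "sY \<in> Elts Y" using aY sY autD(5,6)[OF autY] by auto
  have hys: "hy sY = Idm C V" using amor_start[OF hy sY iota_simps(4)] .
  have hya: "hy aY = Idm C V" using amor_acc[OF hy aY iota_simps(5)] .
  have pmy: "pm C Y (iota C V) hy" using hy amor_pm by blast
  have "Over (iota C V) (Idm C V) = V" using catD(2)[OF cat V] by (simp add: iota_simps)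
  then have "src Y = V" unfolding src_def sY using pmD(2)[OF pmy sYE] hys by simp
  then have VG: "V = Over G aG" using GY unfolding tgt_def aG by simp
  define b where "b = (\<lambda>y. Act G aG (hy y))"
  have pb: "pm C Y G b" unfolding pm_def
  proof (intro conjI ballI impI)
    fix y assume y: "y \<in> Elts Y"
    have hyy: "hy y \<in> Mor C" "Cod C (hy y) = V" "Dom C (hy y) = Over Y y"
      using pmD(1,2)[OF pmy y] by (auto simp: iota_simps)
    show "b y \<in> Elts G" "Over G (b y) = Over Y y" unfolding b_def using autD(2)[OF aut aGE hyy(1)] hyy VG by auto
    fix f assume f: "f \<in> Mor C" "Cod C f = Over Y y"
    have "hy (Act Y y f) = Comp C (hy y) f" using pmD(3)[OF pmy y f] by (simp add: iota_simps)
    then show "b (Act Y y f) = Act G (b y) f"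
      unfolding b_def using autD(4)[OF aut aGE hyy(1) f(1)] hyy VG f by simp
  qed
  have g: "gok C G Y aG sY" by (rule gokI[OF cat aut autY aG sY GY])
  have ab: "id aG = b sY" unfolding b_def hys VG using autD(3)[OF aut aGE] by simp
  have ba: "b aY \<in> Acc G" unfolding b_def hya VG using autD(3)[OF aut aGE] aG by simp
  obtain u where u: "amor C (glue C G Y) G u"
    using gl_amor[OF g sG aY pm_id pb ab _ ba] sG by auto
  have "aleq C Z G" unfolding aleq_def using amor_comp[OF hz u] by blast
  then show "Z \<in> L" using L Z G unfolding is_lang_def by blast
qed

lemma pow_mult:
  assumes dc: "is_dcat C" and L: "is_lang C L"
  shows "ltimes C (lpow C L (Suc n)) (lpow C L m) \<subseteq> lpow C L (Suc n + m)"
proof (induction n)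
  case 0
  have "ltimes C (lpow C L (Suc 0)) (lpow C L m) \<subseteq> ltimes C L (lpow C L m)"
    using ltimes_mono[OF ltimes_one_sub[OF dc L] subset_refl] by simp
  then show ?case by simp
next
  case (Suc n)
  have t1: "\<forall>G\<in>L. is_track C G" by (rule lang_tracks[OF L])
  have t2: "\<forall>G\<in>lpow C L (Suc n). is_track C G" by (rule lang_tracks[OF lpow_lang])
  have t3: "\<forall>G\<in>lpow C L m. is_track C G" by (rule lang_tracks[OF lpow_lang])
  have e: "lpow C L (Suc (Suc n)) = ltimes C L (lpow C L (Suc n))" by (rule lpow.simps(2))
  have "ltimes C (lpow C L (Suc (Suc n))) (lpow C L m) = ltimes C L (ltimes C (lpow C L (Suc n)) (lpow C L m))"
    unfolding e by (rule subset_antisym[OF assoc1[OF dc t1 t2 t3] assoc2[OF dc t1 t2 t3]])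
  also have "\<dots> \<subseteq> ltimes C L (lpow C L (Suc n + m))" by (rule ltimes_mono[OF subset_refl Suc.IH])
  also have "\<dots> = lpow C L (Suc (Suc n) + m)" by (metis add_Suc lpow.simps(2))
  finally show ?case .
qed


lemma ltimes_distL: "ltimes C L (lplus M N) = lplus (ltimes C L M) (ltimes C L N)"
  unfolding ltimes_def lplus_def down_def by blast

lemma ltimes_distR: "ltimes C (lplus L M) N = lplus (ltimes C L N) (ltimes C M N)"
  unfolding ltimes_def lplus_def down_def by blast

lemma ltimes_empty: "ltimes C L {} = {}" "ltimes C {} L = {}"
  unfolding ltimes_def down_def by simp_all

lemma sub_star: assumes dc: "is_dcat C" and L: "is_lang C L" shows "L \<subseteq> lstar_plus C L"
proof -
  have "L \<subseteq> lpow C L 1" using sub_ltimes_one[OF dc lang_tracks[OF L]] by simp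
  then show ?thesis unfolding lstar_plus_def by blast
qed

lemma star_star: assumes dc: "is_dcat C" and L: "is_lang C L"
  shows "ltimes C (lstar_plus C L) (lstar_plus C L) \<subseteq> lstar_plus C L"
proof
  fix Z assume "Z \<in> ltimes C (lstar_plus C L) (lstar_plus C L)"
  then obtain G D where Z: "is_track C Z" and G: "G \<in> lstar_plus C L" and D: "D \<in> lstar_plus C L"
    and GD: "tgt G = src D" and a: "aleq C Z (glue C G D)"
    unfolding ltimes_def[of C "lstar_plus C L"] down_def by blast
  from G obtain n where n: "G \<in> lpow C L (Suc n)" unfolding lstar_plus_def
    by (metis UN_E atLeast_iff not0_implies_Suc not_one_le_zero)
  from D obtain m where m: "D \<in> lpow C L m" unfolding lstar_plus_def by blast
  have "Z \<in> ltimes C (lpow C L (Suc n)) (lpow C L m)"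
    unfolding ltimes_def[of C "lpow C L (Suc n)"] down_def using Z n m GD a by blast
  then have "Z \<in> lpow C L (Suc n + m)" using pow_mult[OF dc L] by blast
  then show "Z \<in> lstar_plus C L" unfolding lstar_plus_def by force
qed

lemma star_least:
  assumes dc: "is_dcat C" and L: "is_lang C L" and M: "is_lang C M" and h: "lplus L (ltimes C M M) \<subseteq> M"
  shows "lstar_plus C L \<subseteq> M"
proof -
  have "lpow C L (Suc n) \<subseteq> M" for n
  proof (induction n)
    case 0
    have "lpow C L (Suc 0) \<subseteq> L" using ltimes_one_sub[OF dc L] by simp
    then show ?case using h unfolding lplus_def by blast
  next
    case (Suc n)
    have e: "lpow C L (Suc (Suc n)) = ltimes C L (lpow C L (Suc n))" by (rule lpow.simps(2))
    have "ltimes C L (lpow C L (Suc n)) \<subseteq> ltimes C M M"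
      using ltimes_mono[OF _ Suc.IH] h unfolding lplus_def by blast
    then show ?case unfolding e using h unfolding lplus_def by blast
  qed
  then show ?thesis unfolding lstar_plus_def
    by (metis UN_least atLeast_iff not0_implies_Suc not_one_le_zero)
qed

theorem proposition10:
  fixes C :: "('o,'m) dcat"
  assumes "is_dcat C"
  shows "{} \<in> Rat C
    \<and> (\<forall>L\<in>Rat C. \<forall>M\<in>Rat C. lplus L M \<in> Rat C \<and> ltimes C L M \<in> Rat C)
    \<and> (\<forall>L\<in>Rat C. lstar_plus C L \<in> Rat C)
    \<and> (\<forall>L\<in>Rat C. \<forall>M\<in>Rat C. \<forall>N\<in>Rat C.
          lplus (lplus L M) N = lplus L (lplus M N)
        \<and> lplus L M = lplus M L
        \<and> lplus L L = L
        \<and> lplus L {} = L \<and> lplus {} L = L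
        \<and> ltimes C (ltimes C L M) N = ltimes C L (ltimes C M N)
        \<and> ltimes C L (lplus M N) = lplus (ltimes C L M) (ltimes C L N)
        \<and> ltimes C (lplus L M) N = lplus (ltimes C L N) (ltimes C M N)
        \<and> ltimes C L {} = {} \<and> ltimes C {} L = {})
    \<and> (\<forall>L\<in>Rat C. lplus L (ltimes C (lstar_plus C L) (lstar_plus C L)) \<subseteq> lstar_plus C L)
    \<and> (\<forall>L\<in>Rat C. \<forall>M\<in>Rat C. lplus L (ltimes C M M) \<subseteq> M \<longrightarrow> lstar_plus C L \<subseteq> M)"
proof (intro conjI ballI impI)
  note dc = assms
  show "{} \<in> Rat C" by (rule Rat.Rat_empty)
  fix L assume L: "L \<in> Rat C"
  have lL: "is_lang C L" by (rule Rat_lang[OF L])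
  show "lstar_plus C L \<in> Rat C" by (rule Rat.Rat_splus[OF L])
  show "lplus L (ltimes C (lstar_plus C L) (lstar_plus C L)) \<subseteq> lstar_plus C L"
    unfolding lplus_def using sub_star[OF dc lL] star_star[OF dc lL] by blast
  {
    fix M assume M: "M \<in> Rat C"
    have lM: "is_lang C M" by (rule Rat_lang[OF M])
    show "lplus L M \<in> Rat C" by (rule Rat.Rat_plus[OF L M])
    show "ltimes C L M \<in> Rat C" by (rule Rat.Rat_times[OF L M])
    show "lplus L M = lplus M L" unfolding lplus_def by blast
    show "lplus L L = L" unfolding lplus_def by blast
    show "lplus L {} = L" "lplus {} L = L" unfolding lplus_def by simp_all
    show "ltimes C L {} = {}" "ltimes C {} L = {}" by (rule ltimes_empty)+
    {
      assume "lplus L (ltimes C M M) \<subseteq> M"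
      then show "lstar_plus C L \<subseteq> M" by (rule star_least[OF dc lL lM])
    }
    fix N assume N: "N \<in> Rat C"
    have lN: "is_lang C N" by (rule Rat_lang[OF N])
    show "lplus (lplus L M) N = lplus L (lplus M N)" unfolding lplus_def by blast
    show "ltimes C (ltimes C L M) N = ltimes C L (ltimes C M N)"
      by (rule subset_antisym[OF assoc1[OF dc lang_tracks[OF lL] lang_tracks[OF lM] lang_tracks[OF lN]]
            assoc2[OF dc lang_tracks[OF lL] lang_tracks[OF lM] lang_tracks[OF lN]]])
    show "ltimes C L (lplus M N) = lplus (ltimes C L M) (ltimes C L N)" by (rule ltimes_distL)
    show "ltimes C (lplus L M) N = lplus (ltimes C L N) (ltimes C M N)" by (rule ltimes_distR)
  }
qed

end
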